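(* Let $(\Gamma,\mathbbm{m})$ be a bipartite Brauer graph with bipartition $V=V_1\sqcup V_2$, and let $Q'_\Gamma$, $I'_\Gamma$ be as below. Let $R_\Gamma$ be the set of the following pairs $(s,\varphi_s)$: (a) for each edge $\bar h$ joining a non-truncated vertex $v\in V_1$ to a vertex $w\in V_2$: $(C_{v,\bar h}^{\mathbbm{m}(v)},\,C_{w,\bar h}^{\mathbbm{m}(w)})$; (b) for each half-edge $h$ with $s(h)\in V_2$: $(C_{\alpha_h}^{\mathbbm{m}(s(h))}\alpha_h,\,0)$; (c) for all arrows $\alpha,\beta$ of $Q'_\Gamma$ with $t(\beta)=o(\alpha)$ and $\sigma(\alpha)\neq\beta$: $(\alpha\beta,0)$. Then $R_\Gamma$ is a reduction system for $\Bbbk Q'_\Gamma$ which satisfies the diamond condition for $I'_\Gamma$. Consequently the paths of $Q'_\Gamma$ containing no $s$ (with $(s,\varphi_s)\in R_\Gamma$) as a subpath project to a $\Bbbk$-basis of $\Bbbk Q'_\Gamma/I'_\Gamma\cong B_\Gamma$.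
   Context: Throughout, $\Bbbk$ is an algebraically closed field of characteristic $0$. Paths are written right to left ($\alpha_n\cdots\alpha_1$ starts with $\alpha_1$); $o(p),t(p)$ are origin and terminus; $e_x$ is the trivial path at $x$. A ribbon graph is $\Gamma=(V,H,s,\iota,\rho)$: $V$ finite (vertices), $H$ finite (half-edges), $s:H\to V$, $\iota$ a fixed-point-free involution of $H$, $\rho$ a permutation of $H$ whose cycles are exactly the sets $H_v=s^{-1}(v)$. Edges are $\bar h=\{h,\iota(h)\}$, joining $s(h)$ and $s(\iota(h))$; $\mathrm{val}(v)=|H_v|$; $h^\pm=\rho^{\pm1}(h)$; $\Gamma$ connected. A Brauer graph is $(\Gamma,\mathbbm{m})$, $\mathbbm{m}:V\to\mathbb{Z}_{>0}$; $v$ is truncated if $\mathbbm{m}(v)=\mathrm{val}(v)=1$. $Q_\Gamma$ has vertex set the edges and arrows $\alpha_h:\bar h\to\overline{h^+}$ ($h\in H$), called arrows around $s(h)$; $\sigma(\alpha_h)=\alpha_{h^-}$; for $\alpha=\alpha_h$, $C_\alpha=\alpha\sigma(\alpha)\cdots\sigma^{l}(\alpha)$ with $l+1=\mathrm{val}(s(h))$ (cycle at $t(\alpha)$ with last arrow $\alpha$), $\mathbbm{m}(C_\alpha)=\mathbbm{m}(s(h))$. For an edge $\bar h$ and an endpoint $u$ of $\bar h$, $C_{u,\bar h}$ denotes $C_\alpha$ for the arrow $\alpha$ around $u$ ending at $\bar h$. $I_\Gamma$ is generated by (I) $\alpha\beta$ for arrows with $t(\beta)=o(\alpha)$, $\beta\ne\sigma(\alpha)$,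 and (II) for each edge $\bar h$ with endpoints $u,u'$ (as half-edges $h,\iota(h)$), $C_{u,\bar h}^{\mathbbm{m}(u)}-C_{u',\bar h}^{\mathbbm{m}(u')}$. $B_\Gamma=\Bbbk Q_\Gamma/I_\Gamma$. $\Gamma$ is bipartite if $V=V_1\sqcup V_2$ with every edge joining $V_1$ to $V_2$. $Q'_\Gamma$ is obtained from $Q_\Gamma$ by deleting the loops $\alpha_h$ with $s(h)\in V_1$ truncated, and $I'_\Gamma=I_\Gamma\cap\Bbbk Q'_\Gamma$. A reduction system for $\Bbbk Q$ is a set $R$ of pairs $(s,\varphi_s)$ with $s$ a path of length $\ge2$, no $s$ a subpath of a different $s'$, and $\varphi_s$ a linear combination of paths parallel to $s$ (same origin and terminus) none of which contains any $s'$ as a subpath. A reduction replaces, in a path $p=qsr$, the subpath $s$ by $\varphi_s$ (giving $q\varphi_s r$, extended linearly). $R$ satisfies the diamond condition for an ideal $I$ if (i) $I$ is generated by $\{s-\varphi_s\}$ and (ii) every path is reduction-unique: all sequences of reductions terminate and all lead to the same element spanned by irreducible paths (paths containing no $s$). *)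

theory Defs
  imports Main
begin

text \<open>A path is a pair (origin, arrows), where the arrow list is written right to left
  (composition order): the path [a_n, ..., a_1] starts with a_1.  The origin component
  is only needed to distinguish trivial paths e_x.\<close>

type_synonym ('x,'a) path = "'x \<times> 'a list"

definition valid_path :: "'x set \<Rightarrow> 'a set \<Rightarrow> ('a \<Rightarrow> 'x) \<Rightarrow> ('a \<Rightarrow> 'x) \<Rightarrow> ('x,'a) path \<Rightarrow> bool" where
  "valid_path Vq A src tgt p \<longleftrightarrow>
     fst p \<in> Vq \<and> set (snd p) \<subseteq> A \<and>
     (snd p \<noteq> [] \<longrightarrow> src (last (snd p)) = fst p) \<and>
     (\<forall>i. Suc i < length (snd p) \<longrightarrow> src (snd p ! i) = tgt (snd p ! Suc i))"

definition ptgt :: "('a \<Rightarrow> 'x) \<Rightarrow> ('x,'a) path \<Rightarrow> 'x" where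
  "ptgt tgt p = (if snd p = [] then fst p else tgt (hd (snd p)))"

text \<open>Concatenation p q (first q, then p); meaningful when ptgt q = fst p.\<close>
definition pcomp :: "('x,'a) path \<Rightarrow> ('x,'a) path \<Rightarrow> ('x,'a) path" where
  "pcomp p q = (fst q, snd p @ snd q)"

definition path_alg :: "(('x,'a) path \<Rightarrow> bool) \<Rightarrow> (('x,'a) path \<Rightarrow> 'k::field) set" where
  "path_alg valid = {f. finite {p. f p \<noteq> 0} \<and> (\<forall>p. f p \<noteq> 0 \<longrightarrow> valid p)}"

definition pvec :: "('x,'a) path \<Rightarrow> (('x,'a) path \<Rightarrow> 'k::field)" where
  "pvec p = (\<lambda>q. if q = p then 1 else 0)"

definition amult :: "('a \<Rightarrow> 'x) \<Rightarrow> (('x,'a) path \<Rightarrow> 'k::field) \<Rightarrow> (('x,'a) path \<Rightarrow> 'k) \<Rightarrow> (('x,'a) path \<Rightarrow> 'k)" where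
  "amult tgt f g = (\<lambda>r. \<Sum>pq \<in> {(p,q). f p \<noteq> 0 \<and> g q \<noteq> 0 \<and> ptgt tgt q = fst p \<and> pcomp p q = r}.
                        f (fst pq) * g (snd pq))"

inductive_set ideal_gen :: "(('x,'a) path \<Rightarrow> bool) \<Rightarrow> ('a \<Rightarrow> 'x) \<Rightarrow> (('x,'a) path \<Rightarrow> 'k::field) set
    \<Rightarrow> (('x,'a) path \<Rightarrow> 'k) set"
  for valid tgt G where
  zero: "(\<lambda>_. 0) \<in> ideal_gen valid tgt G"
| gen: "g \<in> G \<Longrightarrow> g \<in> ideal_gen valid tgt G"
| add: "x \<in> ideal_gen valid tgt G \<Longrightarrow> y \<in> ideal_gen valid tgt G \<Longrightarrow> (\<lambda>p. x p + y p) \<in> ideal_gen valid tgt G"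
| smult: "x \<in> ideal_gen valid tgt G \<Longrightarrow> (\<lambda>p. c * x p) \<in> ideal_gen valid tgt G"
| lmult: "x \<in> ideal_gen valid tgt G \<Longrightarrow> valid q \<Longrightarrow> amult tgt (pvec q) x \<in> ideal_gen valid tgt G"
| rmult: "x \<in> ideal_gen valid tgt G \<Longrightarrow> valid q \<Longrightarrow> amult tgt x (pvec q) \<in> ideal_gen valid tgt G"

definition subpath :: "('x,'a) path \<Rightarrow> ('x,'a) path \<Rightarrow> bool" where
  "subpath s p \<longleftrightarrow> (\<exists>a b. snd p = a @ snd s @ b)"

definition irreducible_path :: "(('x,'a) path \<times> (('x,'a) path \<Rightarrow> 'k)) set \<Rightarrow> ('x,'a) path \<Rightarrow> bool" where
  "irreducible_path R p \<longleftrightarrow> \<not> (\<exists>sp \<in> R. subpath (fst sp) p)"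

definition reduction_system :: "(('x,'a) path \<Rightarrow> bool) \<Rightarrow> ('a \<Rightarrow> 'x)
    \<Rightarrow> (('x,'a) path \<times> (('x,'a) path \<Rightarrow> 'k::field)) set \<Rightarrow> bool" where
  "reduction_system valid tgt R \<longleftrightarrow>
     (\<forall>(s,\<phi>) \<in> R. valid s \<and> length (snd s) \<ge> 2 \<and> \<phi> \<in> path_alg valid \<and>
        (\<forall>u. \<phi> u \<noteq> 0 \<longrightarrow> fst u = fst s \<and> ptgt tgt u = ptgt tgt s \<and> irreducible_path R u)) \<and>
     (\<forall>(s,\<phi>) \<in> R. \<forall>(s',\<phi>') \<in> R. s \<noteq> s' \<longrightarrow> \<not> subpath s s')"

text \<open>One (non-trivially acting) reduction step: the basis path u = q s r occurring in f
  with non-zero coefficient is replaced by q phi_s r.\<close>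
definition red_step :: "(('x,'a) path \<Rightarrow> bool) \<Rightarrow> ('a \<Rightarrow> 'x)
    \<Rightarrow> (('x,'a) path \<times> (('x,'a) path \<Rightarrow> 'k::field)) set
    \<Rightarrow> (('x,'a) path \<Rightarrow> 'k) \<Rightarrow> (('x,'a) path \<Rightarrow> 'k) \<Rightarrow> bool" where
  "red_step valid tgt R f g \<longleftrightarrow>
     (\<exists>s \<phi> q r. (s,\<phi>) \<in> R \<and> valid q \<and> valid r \<and> ptgt tgt r = fst s \<and> ptgt tgt s = fst q \<and>
        f (pcomp q (pcomp s r)) \<noteq> 0 \<and>
        g = (\<lambda>x. f x + f (pcomp q (pcomp s r)) *
               (amult tgt (amult tgt (pvec q) \<phi>) (pvec r) x - pvec (pcomp q (pcomp s r)) x)))"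

definition reduction_unique :: "(('x,'a) path \<Rightarrow> bool) \<Rightarrow> ('a \<Rightarrow> 'x)
    \<Rightarrow> (('x,'a) path \<times> (('x,'a) path \<Rightarrow> 'k::field)) set \<Rightarrow> ('x,'a) path \<Rightarrow> bool" where
  "reduction_unique valid tgt R p \<longleftrightarrow>
     \<not> (\<exists>c. c 0 = pvec p \<and> (\<forall>n. red_step valid tgt R (c n) (c (Suc n)))) \<and>
     (\<forall>g1 g2. (red_step valid tgt R)\<^sup>*\<^sup>* (pvec p) g1 \<and> (\<forall>u. g1 u \<noteq> 0 \<longrightarrow> irreducible_path R u) \<and>
              (red_step valid tgt R)\<^sup>*\<^sup>* (pvec p) g2 \<and> (\<forall>u. g2 u \<noteq> 0 \<longrightarrow> irreducible_path R u)
              \<longrightarrow> g1 = g2)"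

definition diamond_condition :: "(('x,'a) path \<Rightarrow> bool) \<Rightarrow> ('a \<Rightarrow> 'x)
    \<Rightarrow> (('x,'a) path \<times> (('x,'a) path \<Rightarrow> 'k::field)) set \<Rightarrow> (('x,'a) path \<Rightarrow> 'k) set \<Rightarrow> bool" where
  "diamond_condition valid tgt R I \<longleftrightarrow>
     I = ideal_gen valid tgt {(\<lambda>x. pvec s x - \<phi> x) | s \<phi>. (s,\<phi>) \<in> R} \<and>
     (\<forall>p. valid p \<longrightarrow> reduction_unique valid tgt R p)"

definition ribbon_graph :: "'v set \<Rightarrow> 'h set \<Rightarrow> ('h \<Rightarrow> 'v) \<Rightarrow> ('h \<Rightarrow> 'h) \<Rightarrow> ('h \<Rightarrow> 'h) \<Rightarrow> bool" where
  "ribbon_graph V H s \<iota> \<rho> \<longleftrightarrow>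
     finite V \<and> finite H \<and> (\<forall>h\<in>H. s h \<in> V) \<and>
     (\<forall>h\<in>H. \<iota> h \<in> H \<and> \<iota> h \<noteq> h \<and> \<iota> (\<iota> h) = h) \<and>
     bij_betw \<rho> H H \<and>
     (\<forall>v\<in>V. \<exists>h\<in>H. s h = v) \<and>
     (\<forall>h\<in>H. \<forall>h'\<in>H. s h = s h' \<longleftrightarrow> (\<exists>n. (\<rho> ^^ n) h = h')) \<and>
     (\<forall>u\<in>V. \<forall>w\<in>V. (u, w) \<in> {(s h, s (\<iota> h)) | h. h \<in> H}\<^sup>*)"

definition brauer_graph :: "'v set \<Rightarrow> 'h set \<Rightarrow> ('h \<Rightarrow> 'v) \<Rightarrow> ('h \<Rightarrow> 'h) \<Rightarrow> ('h \<Rightarrow> 'h) \<Rightarrow> ('v \<Rightarrow> nat) \<Rightarrow> bool" where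
  "brauer_graph V H s \<iota> \<rho> m \<longleftrightarrow> ribbon_graph V H s \<iota> \<rho> \<and> (\<forall>v\<in>V. m v > 0)"

definition bipartition :: "'v set \<Rightarrow> 'h set \<Rightarrow> ('h \<Rightarrow> 'v) \<Rightarrow> ('h \<Rightarrow> 'h) \<Rightarrow> 'v set \<Rightarrow> 'v set \<Rightarrow> bool" where
  "bipartition V H s \<iota> V1 V2 \<longleftrightarrow> V1 \<inter> V2 = {} \<and> V1 \<union> V2 = V \<and>
     (\<forall>h\<in>H. (s h \<in> V1 \<and> s (\<iota> h) \<in> V2) \<or> (s h \<in> V2 \<and> s (\<iota> h) \<in> V1))"

definition valency :: "'h set \<Rightarrow> ('h \<Rightarrow> 'v) \<Rightarrow> 'v \<Rightarrow> nat" where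
  "valency H s v = card {h\<in>H. s h = v}"

definition truncated :: "'h set \<Rightarrow> ('h \<Rightarrow> 'v) \<Rightarrow> ('v \<Rightarrow> nat) \<Rightarrow> 'v \<Rightarrow> bool" where
  "truncated H s m v \<longleftrightarrow> m v = 1 \<and> valency H s v = 1"

text \<open>Quiver Q_Gamma: vertices are edges {h, iota h}; the arrow alpha_h is identified with h.\<close>
definition edges :: "'h set \<Rightarrow> ('h \<Rightarrow> 'h) \<Rightarrow> 'h set set" where
  "edges H \<iota> = {{h, \<iota> h} | h. h \<in> H}"

definition bsrc :: "('h \<Rightarrow> 'h) \<Rightarrow> 'h \<Rightarrow> 'h set" where
  "bsrc \<iota> h = {h, \<iota> h}"

definition btgt :: "('h \<Rightarrow> 'h) \<Rightarrow> ('h \<Rightarrow> 'h) \<Rightarrow> 'h \<Rightarrow> 'h set" where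
  "btgt \<iota> \<rho> h = {\<rho> h, \<iota> (\<rho> h)}"

text \<open>sigma(alpha_h) = alpha_(rho^-1 h).\<close>
definition bsigma :: "'h set \<Rightarrow> ('h \<Rightarrow> 'h) \<Rightarrow> 'h \<Rightarrow> 'h" where
  "bsigma H \<rho> = inv_into H \<rho>"

text \<open>cyc_at h = C_(s h, edge h) = C_alpha for the arrow alpha around s h ending at the
  edge of h, i.e. alpha = sigma(alpha_h) ... ; written list
  [sigma h, sigma^2 h, ..., sigma^val h = h].  So C_(alpha_h) = cyc_at (rho h).\<close>
definition cyc_at :: "'h set \<Rightarrow> ('h \<Rightarrow> 'v) \<Rightarrow> ('h \<Rightarrow> 'h) \<Rightarrow> 'h \<Rightarrow> 'h list" where
  "cyc_at H s \<rho> h = map (\<lambda>i. (bsigma H \<rho> ^^ Suc i) h) [0..<valency H s (s h)]"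

definition ppow :: "'h list \<Rightarrow> nat \<Rightarrow> 'h list" where
  "ppow c n = concat (replicate n c)"

definition mkP :: "('h \<Rightarrow> 'h) \<Rightarrow> 'h list \<Rightarrow> ('h set, 'h) path" where
  "mkP \<iota> as = (bsrc \<iota> (last as), as)"

definition validQ :: "'h set \<Rightarrow> ('h \<Rightarrow> 'h) \<Rightarrow> ('h \<Rightarrow> 'h) \<Rightarrow> ('h set, 'h) path \<Rightarrow> bool" where
  "validQ H \<iota> \<rho> = valid_path (edges H \<iota>) H (bsrc \<iota>) (btgt \<iota> \<rho>)"

definition I_Gamma :: "'h set \<Rightarrow> ('h \<Rightarrow> 'v) \<Rightarrow> ('h \<Rightarrow> 'h) \<Rightarrow> ('h \<Rightarrow> 'h) \<Rightarrow> ('v \<Rightarrow> nat)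
    \<Rightarrow> (('h set, 'h) path \<Rightarrow> 'k::field) set" where
  "I_Gamma H s \<iota> \<rho> m = ideal_gen (validQ H \<iota> \<rho>) (btgt \<iota> \<rho>)
     ({pvec (mkP \<iota> [a, b]) | a b. a \<in> H \<and> b \<in> H \<and> btgt \<iota> \<rho> b = bsrc \<iota> a \<and> b \<noteq> bsigma H \<rho> a} \<union>
      {(\<lambda>x. pvec (mkP \<iota> (ppow (cyc_at H s \<rho> h) (m (s h)))) x
            - pvec (mkP \<iota> (ppow (cyc_at H s \<rho> (\<iota> h)) (m (s (\<iota> h))))) x) | h. h \<in> H})"

text \<open>Q'_Gamma: delete the loops alpha_h with s h in V1 truncated.\<close>
definition arrowsQ' :: "'h set \<Rightarrow> ('h \<Rightarrow> 'v) \<Rightarrow> ('v \<Rightarrow> nat) \<Rightarrow> 'v set \<Rightarrow> 'h set" where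
  "arrowsQ' H s m V1 = {h \<in> H. \<not> (s h \<in> V1 \<and> truncated H s m (s h))}"

definition validQ' :: "'h set \<Rightarrow> ('h \<Rightarrow> 'v) \<Rightarrow> ('h \<Rightarrow> 'h) \<Rightarrow> ('h \<Rightarrow> 'h) \<Rightarrow> ('v \<Rightarrow> nat) \<Rightarrow> 'v set
    \<Rightarrow> ('h set, 'h) path \<Rightarrow> bool" where
  "validQ' H s \<iota> \<rho> m V1 = valid_path (edges H \<iota>) (arrowsQ' H s m V1) (bsrc \<iota>) (btgt \<iota> \<rho>)"

definition I'_Gamma :: "'h set \<Rightarrow> ('h \<Rightarrow> 'v) \<Rightarrow> ('h \<Rightarrow> 'h) \<Rightarrow> ('h \<Rightarrow> 'h) \<Rightarrow> ('v \<Rightarrow> nat) \<Rightarrow> 'v set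
    \<Rightarrow> (('h set, 'h) path \<Rightarrow> 'k::field) set" where
  "I'_Gamma H s \<iota> \<rho> m V1 = I_Gamma H s \<iota> \<rho> m \<inter> path_alg (validQ' H s \<iota> \<rho> m V1)"

definition R_Gamma :: "'h set \<Rightarrow> ('h \<Rightarrow> 'v) \<Rightarrow> ('h \<Rightarrow> 'h) \<Rightarrow> ('h \<Rightarrow> 'h) \<Rightarrow> ('v \<Rightarrow> nat) \<Rightarrow> 'v set \<Rightarrow> 'v set
    \<Rightarrow> (('h set, 'h) path \<times> (('h set, 'h) path \<Rightarrow> 'k::field)) set" where
  "R_Gamma H s \<iota> \<rho> m V1 V2 =
     {(mkP \<iota> (ppow (cyc_at H s \<rho> h) (m (s h))), pvec (mkP \<iota> (ppow (cyc_at H s \<rho> (\<iota> h)) (m (s (\<iota> h)))))) | h.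
         h \<in> H \<and> s h \<in> V1 \<and> \<not> truncated H s m (s h) \<and> s (\<iota> h) \<in> V2} \<union>
     {(mkP \<iota> (ppow (cyc_at H s \<rho> (\<rho> h)) (m (s h)) @ [h]), (\<lambda>_. 0)) | h. h \<in> H \<and> s h \<in> V2} \<union>
     {(mkP \<iota> [a, b], (\<lambda>_. 0)) | a b. a \<in> arrowsQ' H s m V1 \<and> b \<in> arrowsQ' H s m V1 \<and>
         btgt \<iota> \<rho> b = bsrc \<iota> a \<and> bsigma H \<rho> a \<noteq> b}"

definition alg_closed :: "'k::field itself \<Rightarrow> bool" where
  "alg_closed _ \<longleftrightarrow> (\<forall>(n::nat) (c::nat \<Rightarrow> 'k). n > 0 \<longrightarrow> (\<exists>x. x ^ n + (\<Sum>i<n. c i * x ^ i) = 0))"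

end

theory Submission
  imports Defs
begin

locale BG =
  fixes V :: "'v set" and H :: "'h set" and s :: "'h \<Rightarrow> 'v" and \<iota> \<rho> :: "'h \<Rightarrow> 'h"
    and m :: "'v \<Rightarrow> nat" and V1 V2 :: "'v set"
  assumes brauer: "brauer_graph V H s \<iota> \<rho> m"
    and bip: "bipartition V H s \<iota> V1 V2"
begin

abbreviation sg where "sg \<equiv> bsigma H \<rho>"

lemma rib: "ribbon_graph V H s \<iota> \<rho>" using brauer by (simp add: brauer_graph_def)
lemma finH: "finite H" using rib by (simp add: ribbon_graph_def)
lemma iota_H: "h \<in> H \<Longrightarrow> \<iota> h \<in> H" using rib by (simp add: ribbon_graph_def)
lemma iota_neq: "h \<in> H \<Longrightarrow> \<iota> h \<noteq> h" using rib by (simp add: ribbon_graph_def)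
lemma iota_iota[simp]: "h \<in> H \<Longrightarrow> \<iota> (\<iota> h) = h" using rib by (simp add: ribbon_graph_def)
lemma rho_bij: "bij_betw \<rho> H H" using rib by (simp add: ribbon_graph_def)
lemma rho_H: "h \<in> H \<Longrightarrow> \<rho> h \<in> H" using rho_bij by (meson bij_betwE)
lemma rho_inj: "inj_on \<rho> H" using rho_bij by (simp add: bij_betw_def)
lemma s_orbit: "h \<in> H \<Longrightarrow> h' \<in> H \<Longrightarrow> s h = s h' \<longleftrightarrow> (\<exists>n. (\<rho> ^^ n) h = h')"
  using rib by (simp add: ribbon_graph_def)
lemma s_rho[simp]: "h \<in> H \<Longrightarrow> s (\<rho> h) = s h"
proof -
  assume h: "h \<in> H"
  have "(\<rho> ^^ Suc 0) h = \<rho> h" by simp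
  then have "s h = s (\<rho> h)" using s_orbit[of h "\<rho> h"] rho_H[OF h] h by blast
  then show ?thesis by simp
qed
lemma m_pos: "h \<in> H \<Longrightarrow> m (s h) > 0"
  using brauer rib by (auto simp: brauer_graph_def ribbon_graph_def)

lemma sg_H: "h \<in> H \<Longrightarrow> sg h \<in> H"
  unfolding bsigma_def by (metis bij_betw_def inv_into_into rho_bij)
lemma rho_sg[simp]: "h \<in> H \<Longrightarrow> \<rho> (sg h) = h"
  unfolding bsigma_def by (metis bij_betw_def f_inv_into_f rho_bij)
lemma sg_rho[simp]: "h \<in> H \<Longrightarrow> sg (\<rho> h) = h"
  unfolding bsigma_def by (simp add: inv_into_f_f rho_inj)
lemma s_sg[simp]: "h \<in> H \<Longrightarrow> s (sg h) = s h"
  by (metis rho_sg s_rho sg_H)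

lemma V12: "V1 \<inter> V2 = {}" using bip by (simp add: bipartition_def)
lemma sV12: "h \<in> H \<Longrightarrow> s h \<in> V1 \<or> s h \<in> V2" using bip by (auto simp: bipartition_def)
lemma sV1_iota: "h \<in> H \<Longrightarrow> s h \<in> V1 \<Longrightarrow> s (\<iota> h) \<in> V2" using bip V12 by (auto simp: bipartition_def)
lemma sV2_iota: "h \<in> H \<Longrightarrow> s h \<in> V2 \<Longrightarrow> s (\<iota> h) \<in> V1" using bip V12 by (auto simp: bipartition_def)
lemma notV12: "x \<in> V1 \<Longrightarrow> x \<notin> V2" using V12 by auto

lemma rho_pow_H: "h \<in> H \<Longrightarrow> (\<rho> ^^ n) h \<in> H"
  by (induct n) (auto simp: rho_H)
lemma sg_pow_H: "h \<in> H \<Longrightarrow> (sg ^^ n) h \<in> H"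
  by (induct n) (auto simp: sg_H)
lemma s_rho_pow[simp]: "h \<in> H \<Longrightarrow> s ((\<rho> ^^ n) h) = s h"
  by (induct n) (auto simp: rho_pow_H)
lemma s_sg_pow[simp]: "h \<in> H \<Longrightarrow> s ((sg ^^ n) h) = s h"
  by (induct n) (auto simp: sg_pow_H)
lemma rho_sg_pow: "h \<in> H \<Longrightarrow> (\<rho> ^^ n) ((sg ^^ n) h) = h"
proof (induct n arbitrary: h)
  case (Suc n)
  have "(\<rho> ^^ Suc n) ((sg ^^ Suc n) h) = (\<rho> ^^ n) (\<rho> (sg ((sg ^^ n) h)))"
    by (simp add: funpow_swap1)
  also have "\<dots> = h" using Suc by (simp add: sg_pow_H)
  finally show ?case .
qed simp

lemma rho_pow_cancel: "a \<in> H \<Longrightarrow> b \<in> H \<Longrightarrow> (\<rho> ^^ i) a = (\<rho> ^^ i) b \<Longrightarrow> a = b"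
proof (induct i)
  case (Suc i)
  then show ?case using rho_inj rho_pow_H by (simp add: inj_on_def)
qed simp

lemma exists_period: assumes "h \<in> H" shows "\<exists>d>0. (\<rho> ^^ d) h = h"
proof -
  let ?f = "\<lambda>k. (\<rho> ^^ k) h"
  have img: "?f ` {0..card H} \<subseteq> H" using assms rho_pow_H by auto
  have "card (?f ` {0..card H}) \<le> card H" using card_mono[OF finH img] .
  then have "card {0..card H} > card (?f ` {0..card H})" by simp
  then have "\<not> inj_on ?f {0..card H}" by (rule pigeonhole)
  then obtain i j where ij: "i \<noteq> j" "(\<rho> ^^ i) h = (\<rho> ^^ j) h" unfolding inj_on_def by auto
  have gen: "\<exists>d>0. (\<rho> ^^ d) h = h" if "i < j" "(\<rho> ^^ i) h = (\<rho> ^^ j) h" for i j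
  proof -
    have "j = i + (j - i)" using that by simp
    then have "(\<rho> ^^ j) h = (\<rho> ^^ i) ((\<rho> ^^ (j - i)) h)"
      by (metis funpow_add o_apply)
    then have "(\<rho> ^^ i) ((\<rho> ^^ (j - i)) h) = (\<rho> ^^ i) h" using that by simp
    then have "(\<rho> ^^ (j - i)) h = h" using rho_pow_cancel[OF rho_pow_H[OF assms] assms] by blast
    then show ?thesis using \<open>i < j\<close> by (intro exI[of _ "j - i"]) auto
  qed
  show ?thesis
  proof (cases "i < j")
    case True then show ?thesis using gen[OF _ ij(2)] by blast
  next
    case False then have "j < i" using ij(1) by simp
    then show ?thesis using gen[OF _ ij(2)[symmetric]] by blast
  qed
qed

definition valency' where "valency' h = valency H s (s h)"

lemma orbit_eq: "h \<in> H \<Longrightarrow> {h' \<in> H. s h' = s h} = range (\<lambda>n. (\<rho> ^^ n) h)"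
proof -
  assume h: "h \<in> H"
  show ?thesis
  proof (intro equalityI subsetI)
    fix x assume "x \<in> {h' \<in> H. s h' = s h}"
    then have "x \<in> H" "s h = s x" by auto
    then obtain n where "(\<rho> ^^ n) h = x" using s_orbit[OF h] by blast
    then show "x \<in> range (\<lambda>n. (\<rho> ^^ n) h)" by blast
  next
    fix x assume "x \<in> range (\<lambda>n. (\<rho> ^^ n) h)"
    then obtain n where "x = (\<rho> ^^ n) h" by blast
    then show "x \<in> {h' \<in> H. s h' = s h}" using h rho_pow_H by simp
  qed
qed

lemma rho_period: assumes h: "h \<in> H" shows "(\<rho> ^^ valency H s (s h)) h = h"
proof -
  define d where "d = (LEAST d. 0 < d \<and> (\<rho> ^^ d) h = h)"
  have d: "0 < d" "(\<rho> ^^ d) h = h"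
    using LeastI_ex[OF exists_period[OF h]] unfolding d_def by auto
  have dmin: "\<And>k. 0 < k \<Longrightarrow> k < d \<Longrightarrow> (\<rho> ^^ k) h \<noteq> h"
    unfolding d_def using not_less_Least by blast
  have mult: "(\<rho> ^^ (q * d)) h = h" for q
    by (induct q) (simp_all add: funpow_add d(2))
  have modd: "(\<rho> ^^ n) h = (\<rho> ^^ (n mod d)) h" for n
  proof -
    have "(\<rho> ^^ n) h = (\<rho> ^^ (n mod d + (n div d) * d)) h" by simp
    also have "\<dots> = (\<rho> ^^ (n mod d)) ((\<rho> ^^ ((n div d) * d)) h)" by (simp only: funpow_add o_apply)
    also have "\<dots> = (\<rho> ^^ (n mod d)) h" using mult by simp
    finally show ?thesis .
  qed
  have "range (\<lambda>n. (\<rho> ^^ n) h) \<subseteq> (\<lambda>k. (\<rho> ^^ k) h) ` {0..<d}"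
  proof
    fix x assume "x \<in> range (\<lambda>n. (\<rho> ^^ n) h)"
    then obtain n where "x = (\<rho> ^^ n) h" by auto
    then show "x \<in> (\<lambda>k. (\<rho> ^^ k) h) ` {0..<d}"
      using modd[of n] d(1) by (intro image_eqI[of _ _ "n mod d"]) auto
  qed
  then have "range (\<lambda>n. (\<rho> ^^ n) h) = (\<lambda>k. (\<rho> ^^ k) h) ` {0..<d}" by auto
  moreover have "inj_on (\<lambda>k. (\<rho> ^^ k) h) {0..<d}"
    by (rule inj_on_funpow_least) (use d dmin in auto)
  ultimately have "card (range (\<lambda>n. (\<rho> ^^ n) h)) = d" by (simp add: card_image)
  then have "valency H s (s h) = d" unfolding valency_def using orbit_eq[OF h] by simp
  then show ?thesis using d by simp
qed

lemma val_pos: "h \<in> H \<Longrightarrow> valency H s (s h) > 0"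
proof -
  assume h: "h \<in> H"
  have "finite {h' \<in> H. s h' = s h}" using finH by simp
  moreover have "h \<in> {h' \<in> H. s h' = s h}" using h by simp
  ultimately show ?thesis unfolding valency_def by (metis card_gt_0_iff empty_iff)
qed

lemma sg_period: assumes h: "h \<in> H" shows "(sg ^^ valency H s (s h)) h = h"
proof -
  let ?n = "valency H s (s h)"
  let ?y = "(sg ^^ ?n) h"
  have y: "?y \<in> H" "s ?y = s h" using h sg_pow_H by auto
  have "(\<rho> ^^ ?n) ?y = h" using rho_sg_pow h by blast
  moreover have "(\<rho> ^^ ?n) ?y = ?y" using rho_period[OF y(1)] y(2) by simp
  ultimately show ?thesis by simp
qed

end


context BG
begin

definition chain :: "'h list \<Rightarrow> bool" where
  "chain xs \<longleftrightarrow> xs \<noteq> [] \<and> set xs \<subseteq> H \<and> (\<forall>i. Suc i < length xs \<longrightarrow> xs!i = \<rho> (xs!Suc i))"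

lemma chain_nth_last:
  assumes c: "chain xs" and i: "i < length xs"
  shows "xs!i = (\<rho> ^^ (length xs - Suc i)) (last xs)"
proof -
  have "\<forall>i. length xs - Suc i = k \<longrightarrow> i < length xs \<longrightarrow> xs!i = (\<rho> ^^ k) (last xs)" for k
  proof (induct k)
    case 0
    show ?case
    proof (intro allI impI)
      fix i assume "length xs - Suc i = 0" "i < length xs"
      then have "i = length xs - 1" by simp
      then show "xs ! i = (\<rho> ^^ 0) (last xs)" using c by (simp add: chain_def last_conv_nth)
    qed
  next
    case (Suc k)
    show ?case
    proof (intro allI impI)
      fix i assume a: "length xs - Suc i = Suc k" "i < length xs"
      then have "Suc i < length xs" "length xs - Suc (Suc i) = k" by auto
      then have "xs ! Suc i = (\<rho> ^^ k) (last xs)" using Suc by blast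
      moreover have "xs ! i = \<rho> (xs ! Suc i)" using c \<open>Suc i < length xs\<close> by (simp add: chain_def)
      ultimately show "xs ! i = (\<rho> ^^ Suc k) (last xs)" by simp
    qed
  qed
  then show ?thesis using i by blast
qed

lemma chain_last_H: "chain xs \<Longrightarrow> last xs \<in> H"
  unfolding chain_def by (meson last_in_set subsetD)

lemma chain_eq:
  assumes "chain xs" "chain ys" "length xs = length ys" "last xs = last ys"
  shows "xs = ys"
proof (rule nth_equalityI)
  show "length xs = length ys" by fact
  fix i assume "i < length xs"
  then show "xs ! i = ys ! i" using chain_nth_last[OF assms(1)] chain_nth_last[OF assms(2)] assms(3,4) by simp
qed

lemma chain_s:
  assumes c: "chain xs" and x: "x \<in> set xs" shows "s x = s (last xs)"
proof -
  obtain i where i: "i < length xs" "x = xs ! i" using x by (metis in_set_conv_nth)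
  then have "x = (\<rho> ^^ (length xs - Suc i)) (last xs)" using chain_nth_last[OF c] by simp
  then show ?thesis using chain_last_H[OF c] by simp
qed

lemma chain_H: "chain xs \<Longrightarrow> x \<in> set xs \<Longrightarrow> x \<in> H"
  unfolding chain_def by blast

lemma chain_infix:
  assumes c: "chain (a @ b @ c)" and b: "b \<noteq> []" shows "chain b"
  unfolding chain_def
proof (intro conjI allI impI)
  show "b \<noteq> []" by fact
  show "set b \<subseteq> H" using c by (simp add: chain_def)
  fix i assume i: "Suc i < length b"
  have nb: "(a @ b @ c) ! (length a + j) = b ! j" if "j < length b" for j
    using that by (simp add: nth_append)
  have "Suc (length a + i) < length (a @ b @ c)" using i by simp
  then have "(a @ b @ c) ! (length a + i) = \<rho> ((a @ b @ c) ! Suc (length a + i))"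
    using c unfolding chain_def by blast
  moreover have "(a @ b @ c) ! (length a + i) = b ! i" using i nb by simp
  moreover have "(a @ b @ c) ! Suc (length a + i) = b ! Suc i"
    using nb[of "Suc i"] i by simp
  ultimately show "b ! i = \<rho> (b ! Suc i)" by simp
qed

lemma chain_suffix: "chain (a @ b) \<Longrightarrow> b \<noteq> [] \<Longrightarrow> chain b"
  using chain_infix[of a b "[]"] by simp
lemma chain_prefix: "chain (a @ b) \<Longrightarrow> a \<noteq> [] \<Longrightarrow> chain a"
  using chain_infix[of "[]" a b] by simp

lemma chain_app:
  assumes x: "chain xs" and y: "chain ys" and l: "last xs = \<rho> (hd ys)"
  shows "chain (xs @ ys)"
  unfolding chain_def
proof (intro conjI allI impI)
  show "xs @ ys \<noteq> []" using x by (simp add: chain_def)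
  show "set (xs @ ys) \<subseteq> H" using x y by (simp add: chain_def)
  fix i assume i: "Suc i < length (xs @ ys)"
  consider "Suc i < length xs" | "Suc i = length xs" | "length xs \<le> i" by linarith
  then show "(xs @ ys) ! i = \<rho> ((xs @ ys) ! Suc i)"
  proof cases
    case 1 then show ?thesis using x by (simp add: chain_def nth_append)
  next
    case 2
    have ii: "i = length xs - 1" using 2 by simp
    have "(xs @ ys) ! i = xs ! i" using 2 by (simp add: nth_append)
    also have "\<dots> = last xs" using ii x by (simp add: last_conv_nth chain_def)
    finally have "(xs @ ys) ! i = last xs" .
    moreover have "(xs @ ys) ! Suc i = hd ys" using 2 y by (simp add: nth_append hd_conv_nth chain_def)
    ultimately show ?thesis using l by simp
  next
    case 3
    have e1: "(xs @ ys) ! i = ys ! (i - length xs)" using 3 by (simp add: nth_append)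
    have e2: "(xs @ ys) ! Suc i = ys ! Suc (i - length xs)" using 3 by (simp add: nth_append Suc_diff_le)
    have "Suc (i - length xs) < length ys" using 3 i by simp
    then show ?thesis using y e1 e2 by (simp add: chain_def)
  qed
qed

lemma chain_pair: "chain (a @ [x, y] @ c) \<Longrightarrow> x = \<rho> y"
proof -
  assume c: "chain (a @ [x, y] @ c)"
  have "Suc (length a) < length (a @ [x, y] @ c)" by simp
  then have "(a @ [x, y] @ c) ! length a = \<rho> ((a @ [x, y] @ c) ! Suc (length a))"
    using c unfolding chain_def by blast
  then show ?thesis by (simp add: nth_append)
qed

lemma not_chain:
  assumes "xs \<noteq> []" "set xs \<subseteq> H" "\<not> chain xs"
  shows "\<exists>a x y c. xs = a @ [x, y] @ c \<and> x \<noteq> \<rho> y"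
proof -
  obtain i where i: "Suc i < length xs" "xs ! i \<noteq> \<rho> (xs ! Suc i)" using assms unfolding chain_def by blast
  have "xs = take i xs @ xs ! i # drop (Suc i) xs" using i by (simp add: id_take_nth_drop)
  also have "drop (Suc i) xs = xs ! Suc i # drop (Suc (Suc i)) xs" using i by (simp add: Cons_nth_drop_Suc)
  finally have "xs = take i xs @ [xs ! i, xs ! Suc i] @ drop (Suc (Suc i)) xs" by simp
  then show ?thesis using i by blast
qed

lemma chain_single: "h \<in> H \<Longrightarrow> chain [h]"
  by (simp add: chain_def)

lemma cyc_len[simp]: "length (cyc_at H s \<rho> h) = valency H s (s h)"
  by (simp add: cyc_at_def)

lemma cyc_nth: "i < valency H s (s h) \<Longrightarrow> cyc_at H s \<rho> h ! i = (sg ^^ Suc i) h"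
  by (simp add: cyc_at_def)

lemma cyc_chain: assumes h: "h \<in> H" shows "chain (cyc_at H s \<rho> h)"
  unfolding chain_def
proof (intro conjI allI impI)
  show "cyc_at H s \<rho> h \<noteq> []" using val_pos[OF h] by (simp add: cyc_at_def)
  show "set (cyc_at H s \<rho> h) \<subseteq> H"
    unfolding cyc_at_def using h sg_pow_H[of h] by (auto simp del: funpow.simps)
  fix i assume i: "Suc i < length (cyc_at H s \<rho> h)"
  have "cyc_at H s \<rho> h ! Suc i = (sg ^^ Suc (Suc i)) h" using i by (simp add: cyc_nth del: funpow.simps)
  also have "\<dots> = sg ((sg ^^ Suc i) h)" by (simp only: funpow.simps o_apply)
  finally have "cyc_at H s \<rho> h ! Suc i = sg ((sg ^^ Suc i) h)" .
  moreover have "cyc_at H s \<rho> h ! i = (sg ^^ Suc i) h" using i by (simp add: cyc_nth del: funpow.simps)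
  moreover have "(sg ^^ Suc i) h \<in> H" using h by (rule sg_pow_H)
  ultimately show "cyc_at H s \<rho> h ! i = \<rho> (cyc_at H s \<rho> h ! Suc i)"
    by (simp only: rho_sg)
qed

lemma cyc_last: assumes h: "h \<in> H" shows "last (cyc_at H s \<rho> h) = h"
proof -
  have "cyc_at H s \<rho> h \<noteq> []" using val_pos[OF h] by (simp add: cyc_at_def)
  then have "last (cyc_at H s \<rho> h) = cyc_at H s \<rho> h ! (valency H s (s h) - 1)" by (simp add: last_conv_nth)
  also have "\<dots> = (sg ^^ valency H s (s h)) h" using val_pos[OF h] by (simp add: cyc_nth del: funpow.simps)
  finally show ?thesis using sg_period[OF h] by simp
qed

lemma cyc_hd: assumes h: "h \<in> H" shows "hd (cyc_at H s \<rho> h) = sg h"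
proof -
  have "cyc_at H s \<rho> h \<noteq> []" using val_pos[OF h] by (simp add: cyc_at_def)
  then have "hd (cyc_at H s \<rho> h) = cyc_at H s \<rho> h ! 0" by (simp add: hd_conv_nth)
  then show ?thesis using val_pos[OF h] by (simp add: cyc_nth)
qed

lemma ppow_Suc: "ppow c (Suc k) = c @ ppow c k" by (simp add: ppow_def)
lemma ppow_len: "length (ppow c k) = k * length c" by (induct k) (simp_all add: ppow_def)
lemma ppow_set: "set (ppow c k) \<subseteq> set c" by (induct k) (auto simp: ppow_def)

lemma ppow_props:
  assumes h: "h \<in> H" and k: "k > 0"
  shows "chain (ppow (cyc_at H s \<rho> h) k) \<and> last (ppow (cyc_at H s \<rho> h) k) = h \<and>
         hd (ppow (cyc_at H s \<rho> h) k) = sg h"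
  using k
proof (induct k)
  case 0 then show ?case by simp
next
  case (Suc k)
  let ?c = "cyc_at H s \<rho> h"
  have cne: "?c \<noteq> []" using cyc_chain[OF h] by (simp add: chain_def)
  show ?case
  proof (cases "k = 0")
    case True
    then show ?thesis using cyc_chain[OF h] cyc_last[OF h] cyc_hd[OF h] by (simp add: ppow_def)
  next
    case False
    then have IH: "chain (ppow ?c k)" "last (ppow ?c k) = h" "hd (ppow ?c k) = sg h" using Suc by auto
    have ne: "ppow ?c k \<noteq> []" using IH(1) by (simp add: chain_def)
    have "chain (?c @ ppow ?c k)"
      by (rule chain_app[OF cyc_chain[OF h] IH(1)]) (simp add: IH(3) cyc_last[OF h] h)
    then show ?thesis using IH ne cne cyc_hd[OF h] by (simp add: ppow_Suc)
  qed
qed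

definition Kv :: "'v \<Rightarrow> nat" where "Kv v = m v * valency H s v"
definition Cy :: "'h \<Rightarrow> 'h list" where "Cy h = ppow (cyc_at H s \<rho> h) (m (s h))"
definition Bl :: "'h \<Rightarrow> 'h list" where "Bl h = ppow (cyc_at H s \<rho> (\<rho> h)) (m (s h)) @ [h]"

lemma Kv_pos: "h \<in> H \<Longrightarrow> Kv (s h) > 0"
  using m_pos val_pos by (simp add: Kv_def)

lemma Cy_props:
  assumes h: "h \<in> H"
  shows "chain (Cy h)" "last (Cy h) = h" "hd (Cy h) = sg h" "length (Cy h) = Kv (s h)"
    "Cy h \<noteq> []" "set (Cy h) \<subseteq> H"
proof -
  show "chain (Cy h)" "last (Cy h) = h" "hd (Cy h) = sg h"
    using ppow_props[OF h m_pos[OF h]] by (simp_all add: Cy_def)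
  then show "Cy h \<noteq> []" "set (Cy h) \<subseteq> H" by (simp_all add: chain_def)
  show "length (Cy h) = Kv (s h)" by (simp add: Cy_def Kv_def ppow_len)
qed

lemma Bl_props:
  assumes h: "h \<in> H"
  shows "chain (Bl h)" "last (Bl h) = h" "length (Bl h) = Suc (Kv (s h))"
proof -
  have rh: "\<rho> h \<in> H" using rho_H[OF h] .
  have e: "ppow (cyc_at H s \<rho> (\<rho> h)) (m (s h)) = Cy (\<rho> h)" using h by (simp add: Cy_def)
  have "chain (Cy (\<rho> h) @ [h])"
    using chain_app[OF Cy_props(1)[OF rh] chain_single[OF h]] Cy_props(2)[OF rh] by simp
  then show "chain (Bl h)" using e by (simp add: Bl_def)
  show "last (Bl h) = h" by (simp add: Bl_def)
  show "length (Bl h) = Suc (Kv (s h))" using e Cy_props(4)[OF rh] h by (simp add: Bl_def)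
qed

end


lemma fst_pcomp[simp]: "fst (pcomp q p) = fst p" by (simp add: pcomp_def)
lemma snd_pcomp[simp]: "snd (pcomp q p) = snd q @ snd p" by (simp add: pcomp_def)

lemma pcomp_inj_l: "pcomp q p = pcomp q p' \<Longrightarrow> p = p'"
  by (simp add: pcomp_def prod_eq_iff)
lemma pcomp_inj_r: "pcomp p r = pcomp p' r \<Longrightarrow> fst p = fst p' \<Longrightarrow> p = p'"
  by (simp add: pcomp_def prod_eq_iff)

lemma pcomp_assoc: "pcomp q (pcomp p r) = pcomp (pcomp q p) r"
  by (simp add: pcomp_def)

lemma ptgt_comp_l: "ptgt tgt p = fst q \<Longrightarrow> ptgt tgt (pcomp q p) = ptgt tgt q"
  by (cases "snd q") (auto simp: ptgt_def pcomp_def)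

lemma ptgt_comp_r: "fst p = ptgt tgt r \<Longrightarrow> ptgt tgt (pcomp p r) = ptgt tgt p"
  by (cases "snd p") (auto simp: ptgt_def pcomp_def)

lemma vp_nil: "valid_path V A src tgt (x, []) \<longleftrightarrow> x \<in> V"
  by (simp add: valid_path_def)

lemma vp_last: "valid_path V A src tgt p \<Longrightarrow> snd p \<noteq> [] \<Longrightarrow> src (last (snd p)) = fst p"
  by (simp add: valid_path_def)

lemma vp_comp:
  assumes q: "valid_path V A src tgt q" and p: "valid_path V A src tgt p" and c: "ptgt tgt p = fst q"
  shows "valid_path V A src tgt (pcomp q p)"
proof -
  obtain y xs where qq: "q = (y, xs)" by (cases q)
  obtain x ys where pp: "p = (x, ys)" by (cases p)
  have qv: "y \<in> V" "set xs \<subseteq> A" "xs \<noteq> [] \<longrightarrow> src (last xs) = y"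
     "\<forall>i. Suc i < length xs \<longrightarrow> src (xs ! i) = tgt (xs ! Suc i)" using q qq by (auto simp: valid_path_def)
  have pv: "x \<in> V" "set ys \<subseteq> A" "ys \<noteq> [] \<longrightarrow> src (last ys) = x"
     "\<forall>i. Suc i < length ys \<longrightarrow> src (ys ! i) = tgt (ys ! Suc i)" using p pp by (auto simp: valid_path_def)
  have c': "ptgt tgt (x, ys) = y" using c qq pp by simp
  have cc: "(if ys = [] then x else tgt (hd ys)) = y" using c' by (cases "ys = []") (simp_all add: ptgt_def)
  have last: "xs @ ys \<noteq> [] \<longrightarrow> src (last (xs @ ys)) = x"
  proof
    assume ne: "xs @ ys \<noteq> []"
    show "src (last (xs @ ys)) = x"
    proof (cases "ys = []")
      case True then show ?thesis using ne qv(3) cc by simp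
    next
      case False then show ?thesis using pv(3) by simp
    qed
  qed
  have adj: "\<forall>i. Suc i < length (xs @ ys) \<longrightarrow> src ((xs @ ys) ! i) = tgt ((xs @ ys) ! Suc i)"
  proof (intro allI impI)
    fix i assume i: "Suc i < length (xs @ ys)"
    consider "Suc i < length xs" | "Suc i = length xs" | "length xs \<le> i" by linarith
    then show "src ((xs @ ys) ! i) = tgt ((xs @ ys) ! Suc i)"
    proof cases
      case 1 then show ?thesis using qv(4) by (simp add: nth_append)
    next
      case 2
      then have ysne: "ys \<noteq> []" using i by auto
      have ii: "i = length xs - 1" using 2 by simp
      have xne: "xs \<noteq> []" using 2 by auto
      have "(xs @ ys) ! i = xs ! i" using 2 by (simp add: nth_append)
      also have "\<dots> = last xs" using ii xne by (simp add: last_conv_nth)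
      finally have "(xs @ ys) ! i = last xs" .
      moreover have "(xs @ ys) ! Suc i = hd ys" using 2 ysne by (simp add: nth_append hd_conv_nth)
      moreover have "xs \<noteq> []" using 2 by auto
      ultimately show ?thesis using qv(3) cc ysne by simp
    next
      case 3
      have e1: "(xs @ ys) ! i = ys ! (i - length xs)" using 3 by (simp add: nth_append)
      have e2: "(xs @ ys) ! Suc i = ys ! Suc (i - length xs)" using 3 by (simp add: nth_append Suc_diff_le)
      have "Suc (i - length xs) < length ys" using 3 i by simp
      then show ?thesis using pv(4) e1 e2 by simp
    qed
  qed
  show ?thesis using qq pp qv pv last adj by (simp add: valid_path_def pcomp_def)
qed

lemma vp_split:
  assumes v: "valid_path V A src tgt (x, xs @ ys)" and tA: "\<forall>a\<in>A. tgt a \<in> V"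
  shows "valid_path V A src tgt (x, ys)" "valid_path V A src tgt (ptgt tgt (x, ys), xs)"
proof -
  have vv: "x \<in> V" "set xs \<subseteq> A" "set ys \<subseteq> A" "xs @ ys \<noteq> [] \<longrightarrow> src (last (xs @ ys)) = x"
     "\<forall>i. Suc i < length (xs @ ys) \<longrightarrow> src ((xs @ ys) ! i) = tgt ((xs @ ys) ! Suc i)"
    using v by (auto simp: valid_path_def)
  have adjy: "\<forall>i. Suc i < length ys \<longrightarrow> src (ys ! i) = tgt (ys ! Suc i)"
  proof (intro allI impI)
    fix i assume i: "Suc i < length ys"
    have "Suc (length xs + i) < length (xs @ ys)" using i by simp
    then have "src ((xs @ ys) ! (length xs + i)) = tgt ((xs @ ys) ! Suc (length xs + i))" using vv(5) by blast
    moreover have "(xs @ ys) ! Suc (length xs + i) = ys ! Suc i"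
      by (metis add_Suc_right nth_append_length_plus)
    ultimately show "src (ys ! i) = tgt (ys ! Suc i)" by simp
  qed
  have ly: "ys \<noteq> [] \<longrightarrow> src (last ys) = x" using vv(4) by auto
  show "valid_path V A src tgt (x, ys)" using vv(1,3) ly adjy by (simp add: valid_path_def)
  have adjx: "\<forall>i. Suc i < length xs \<longrightarrow> src (xs ! i) = tgt (xs ! Suc i)"
  proof (intro allI impI)
    fix i assume i: "Suc i < length xs"
    then have "Suc i < length (xs @ ys)" by simp
    then have "src ((xs @ ys) ! i) = tgt ((xs @ ys) ! Suc i)" using vv(5) by blast
    then show "src (xs ! i) = tgt (xs ! Suc i)" using i by (simp add: nth_append)
  qed
  have pv: "ptgt tgt (x, ys) \<in> V"
  proof (cases "ys = []")
    case True then show ?thesis using vv(1) by (simp add: ptgt_def)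
  next
    case False then have "hd ys \<in> A" using vv(3) by (meson hd_in_set subsetD)
    then show ?thesis using tA False by (simp add: ptgt_def)
  qed
  have lx: "xs \<noteq> [] \<longrightarrow> src (last xs) = ptgt tgt (x, ys)"
  proof
    assume xne: "xs \<noteq> []"
    show "src (last xs) = ptgt tgt (x, ys)"
    proof (cases "ys = []")
      case True then show ?thesis using vv(4) xne by (simp add: ptgt_def)
    next
      case False
      have "Suc (length xs - 1) < length (xs @ ys)" using xne False by simp
      then have "src ((xs @ ys) ! (length xs - 1)) = tgt ((xs @ ys) ! Suc (length xs - 1))" using vv(5) by blast
      moreover have "(xs @ ys) ! (length xs - 1) = last xs" using xne by (simp add: nth_append last_conv_nth)
      moreover have "(xs @ ys) ! Suc (length xs - 1) = hd ys" using xne False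
        by (simp add: nth_append hd_conv_nth)
      ultimately show ?thesis using False by (simp add: ptgt_def)
    qed
  qed
  show "valid_path V A src tgt (ptgt tgt (x, ys), xs)" using pv vv(2) lx adjx by (simp add: valid_path_def)
qed

lemma pvec_eq: "pvec p u = (if u = p then 1 else 0)" by (simp add: pvec_def)

lemma amult_left:
  fixes f :: "('x,'b) path \<Rightarrow> 'k::field"
  shows "amult tgt (pvec q) f u = (if (\<exists>l. snd u = snd q @ l) \<and> ptgt tgt (fst u, drop (length (snd q)) (snd u)) = fst q
      then f (fst u, drop (length (snd q)) (snd u)) else 0)"
proof -
  define p2 where "p2 = (fst u, drop (length (snd q)) (snd u))"
  define C where "C = ((\<exists>l. snd u = snd q @ l) \<and> ptgt tgt p2 = fst q)"
  have S: "{(p, q'). pvec q p \<noteq> (0::'k) \<and> f q' \<noteq> 0 \<and> ptgt tgt q' = fst p \<and> pcomp p q' = u} =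
      (if C \<and> f p2 \<noteq> 0 then {(q, p2)} else {})"
  proof (intro set_eqI iffI)
    fix z assume "z \<in> {(p, q'). pvec q p \<noteq> (0::'k) \<and> f q' \<noteq> 0 \<and> ptgt tgt q' = fst p \<and> pcomp p q' = u}"
    then obtain p q' where z: "z = (p, q')" "pvec q p \<noteq> (0::'k)" "f q' \<noteq> 0" "ptgt tgt q' = fst p" "pcomp p q' = u" by blast
    then have pq: "p = q" by (simp add: pvec_def split: if_splits)
    have "q' = p2" using z pq unfolding p2_def by (auto simp: pcomp_def)
    moreover have "C" using z pq \<open>q' = p2\<close> unfolding C_def by (auto simp: pcomp_def)
    ultimately show "z \<in> (if C \<and> f p2 \<noteq> 0 then {(q, p2)} else {})" using z pq by simp
  next
    fix z assume z: "z \<in> (if C \<and> f p2 \<noteq> 0 then {(q, p2)} else {})"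
    then have zz: "z = (q, p2)" "C" "f p2 \<noteq> 0" by (auto split: if_splits)
    then obtain l where l: "snd u = snd q @ l" unfolding C_def by blast
    have "pcomp q p2 = u" using l unfolding p2_def pcomp_def by (simp add: prod_eq_iff)
    then show "z \<in> {(p, q'). pvec q p \<noteq> (0::'k) \<and> f q' \<noteq> 0 \<and> ptgt tgt q' = fst p \<and> pcomp p q' = u}"
      using zz unfolding C_def by (simp add: pvec_def)
  qed
  show ?thesis
    unfolding amult_def S[unfolded p2_def C_def] by (simp add: pvec_def)
qed

lemma amult_right:
  fixes f :: "('x,'b) path \<Rightarrow> 'k::field"
  shows "amult tgt f (pvec r) u = (if (\<exists>l. snd u = l @ snd r) \<and> fst u = fst r
      then f (ptgt tgt r, take (length (snd u) - length (snd r)) (snd u)) else 0)"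
proof -
  define p1 where "p1 = (ptgt tgt r, take (length (snd u) - length (snd r)) (snd u))"
  define C where "C = ((\<exists>l. snd u = l @ snd r) \<and> fst u = fst r)"
  have S: "{(p, q'). f p \<noteq> (0::'k) \<and> pvec r q' \<noteq> (0::'k) \<and> ptgt tgt q' = fst p \<and> pcomp p q' = u} =
      (if C \<and> f p1 \<noteq> 0 then {(p1, r)} else {})"
  proof (intro set_eqI iffI)
    fix z assume "z \<in> {(p, q'). f p \<noteq> (0::'k) \<and> pvec r q' \<noteq> (0::'k) \<and> ptgt tgt q' = fst p \<and> pcomp p q' = u}"
    then obtain p q' where z: "z = (p, q')" "f p \<noteq> 0" "pvec r q' \<noteq> (0::'k)" "ptgt tgt q' = fst p" "pcomp p q' = u" by blast
    then have pq: "q' = r" by (simp add: pvec_def split: if_splits)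
    have su: "snd u = snd p @ snd r" "fst u = fst r" using z pq by (auto simp: pcomp_def)
    have "p = p1" unfolding p1_def using su z(4) pq by (simp add: prod_eq_iff)
    moreover have "C" using z pq unfolding C_def by (auto simp: pcomp_def)
    ultimately show "z \<in> (if C \<and> f p1 \<noteq> 0 then {(p1, r)} else {})" using z pq by simp
  next
    fix z assume z: "z \<in> (if C \<and> f p1 \<noteq> 0 then {(p1, r)} else {})"
    then have zz: "z = (p1, r)" "C" "f p1 \<noteq> 0" by (auto split: if_splits)
    then obtain l where l: "snd u = l @ snd r" "fst u = fst r" unfolding C_def by blast
    have "pcomp p1 r = u" using l unfolding p1_def by (simp add: pcomp_def prod_eq_iff)
    then show "z \<in> {(p, q'). f p \<noteq> (0::'k) \<and> pvec r q' \<noteq> (0::'k) \<and> ptgt tgt q' = fst p \<and> pcomp p q' = u}"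
      using zz unfolding p1_def by (simp add: pvec_def)
  qed
  show ?thesis
    unfolding amult_def S[unfolded p1_def C_def] by (simp add: pvec_def)
qed

lemma amult_left_at: "ptgt tgt p = fst q \<Longrightarrow> amult tgt (pvec q) f (pcomp q p) = f p"
  by (simp add: amult_left pcomp_def)

lemma amult_left_ex:
  assumes "amult tgt (pvec q) f u \<noteq> 0" shows "\<exists>p. ptgt tgt p = fst q \<and> u = pcomp q p \<and> f p \<noteq> 0"
proof -
  define p2 where "p2 = (fst u, drop (length (snd q)) (snd u))"
  have C: "(\<exists>l. snd u = snd q @ l)" "ptgt tgt p2 = fst q" "f p2 \<noteq> 0"
    using assms unfolding amult_left p2_def by (auto split: if_splits)
  have "u = pcomp q p2" using C(1) unfolding p2_def pcomp_def by (auto simp: prod_eq_iff)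
  then show ?thesis using C by blast
qed

lemma amult_right_at: "fst p = ptgt tgt r \<Longrightarrow> amult tgt f (pvec r) (pcomp p r) = f p"
  by (cases p) (simp add: amult_right pcomp_def)

lemma amult_right_ex:
  assumes "amult tgt f (pvec r) u \<noteq> 0" shows "\<exists>p. fst p = ptgt tgt r \<and> u = pcomp p r \<and> f p \<noteq> 0"
proof -
  define p1 where "p1 = (ptgt tgt r, take (length (snd u) - length (snd r)) (snd u))"
  have C: "(\<exists>l. snd u = l @ snd r)" "fst u = fst r" "f p1 \<noteq> 0"
    using assms unfolding amult_right p1_def by (auto split: if_splits)
  have "u = pcomp p1 r" using C(1,2) unfolding p1_def pcomp_def by (auto simp: prod_eq_iff)
  then show ?thesis using C unfolding p1_def by auto
qed



definition lin :: "('p \<Rightarrow> 'k::field) \<Rightarrow> ('p \<Rightarrow> 'k) \<Rightarrow> 'k" where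
  "lin F x = (\<Sum>p\<in>{p. x p \<noteq> 0}. x p * F p)"

lemma lin_super: "finite S \<Longrightarrow> {p. x p \<noteq> 0} \<subseteq> S \<Longrightarrow> lin F x = (\<Sum>p\<in>S. x p * F p)"
  unfolding lin_def by (rule sum.mono_neutral_left) auto

lemma fin_add: "finite {p. x p \<noteq> 0} \<Longrightarrow> finite {p. y p \<noteq> 0} \<Longrightarrow> finite {p. x p + y p \<noteq> (0::'k::field)}"
  by (rule finite_subset[of _ "{p. x p \<noteq> 0} \<union> {p. y p \<noteq> 0}"]) auto

lemma fin_smult: "finite {p. x p \<noteq> 0} \<Longrightarrow> finite {p. c * x p \<noteq> (0::'k::field)}"
  by (rule finite_subset[of _ "{p. x p \<noteq> 0}"]) auto

lemma lin_add:
  assumes "finite {p. x p \<noteq> 0}" "finite {p. y p \<noteq> 0}"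
  shows "lin F (\<lambda>p. x p + y p) = lin F x + lin F y"
proof -
  let ?S = "{p. x p \<noteq> 0} \<union> {p. y p \<noteq> 0}"
  have f: "finite ?S" using assms by simp
  have "lin F (\<lambda>p. x p + y p) = (\<Sum>p\<in>?S. (x p + y p) * F p)" by (rule lin_super[OF f]) auto
  also have "\<dots> = (\<Sum>p\<in>?S. x p * F p) + (\<Sum>p\<in>?S. y p * F p)" by (simp add: distrib_right sum.distrib)
  also have "(\<Sum>p\<in>?S. x p * F p) = lin F x" by (rule lin_super[OF f, symmetric]) auto
  also have "(\<Sum>p\<in>?S. y p * F p) = lin F y" by (rule lin_super[OF f, symmetric]) auto
  finally show ?thesis .
qed

lemma lin_smult:
  assumes "finite {p. x p \<noteq> 0}"
  shows "lin F (\<lambda>p. c * x p) = c * lin F x"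
proof -
  have "lin F (\<lambda>p. c * x p) = (\<Sum>p\<in>{p. x p \<noteq> 0}. c * x p * F p)" by (rule lin_super[OF assms]) auto
  also have "\<dots> = c * lin F x" unfolding lin_def by (simp add: sum_distrib_left mult.assoc)
  finally show ?thesis .
qed

lemma lin_pvec: "lin F (pvec a) = F a"
proof -
  have "lin F (pvec a) = (\<Sum>p\<in>{a}. pvec a p * F p)" by (rule lin_super) (auto simp: pvec_def)
  then show ?thesis by (simp add: pvec_def)
qed

lemma lin_zero: "lin F (\<lambda>_. 0) = 0" by (simp add: lin_def)

lemma lin_cong: "(\<And>p. x p \<noteq> 0 \<Longrightarrow> F p = G p) \<Longrightarrow> lin F x = lin G x"
  unfolding lin_def by (rule sum.cong) auto

lemma lin_F0: "(\<And>p. x p \<noteq> 0 \<Longrightarrow> F p = 0) \<Longrightarrow> lin F x = 0"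
  unfolding lin_def by (rule sum.neutral) auto

lemma lin_reindex:
  assumes fx: "finite {p. x p \<noteq> 0}"
    and inj: "inj_on g {p. x p \<noteq> 0 \<and> C p}"
    and ex: "\<And>u. y u \<noteq> 0 \<Longrightarrow> \<exists>p. C p \<and> u = g p \<and> x p \<noteq> 0"
    and at: "\<And>p. C p \<Longrightarrow> y (g p) = x p"
  shows "lin F y = lin (\<lambda>p. if C p then F (g p) else 0) x" "finite {u. y u \<noteq> 0}"
proof -
  have supp: "{u. y u \<noteq> 0} = g ` {p. x p \<noteq> 0 \<and> C p}"
  proof (intro equalityI subsetI)
    fix u assume "u \<in> {u. y u \<noteq> 0}"
    then obtain p where "C p" "u = g p" "x p \<noteq> 0" using ex by blast
    then show "u \<in> g ` {p. x p \<noteq> 0 \<and> C p}" by blast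
  next
    fix u assume "u \<in> g ` {p. x p \<noteq> 0 \<and> C p}"
    then obtain p where "C p" "u = g p" "x p \<noteq> 0" by blast
    then show "u \<in> {u. y u \<noteq> 0}" using at by simp
  qed
  have fA: "finite {p. x p \<noteq> 0 \<and> C p}" using fx by (rule finite_subset[rotated]) auto
  show "finite {u. y u \<noteq> 0}" unfolding supp using fA by simp
  have "lin F y = (\<Sum>u\<in>g ` {p. x p \<noteq> 0 \<and> C p}. y u * F u)" unfolding lin_def supp ..
  also have "\<dots> = (\<Sum>p\<in>{p. x p \<noteq> 0 \<and> C p}. y (g p) * F (g p))"
    by (rule sum.reindex[OF inj, unfolded comp_def])
  also have "\<dots> = (\<Sum>p\<in>{p. x p \<noteq> 0 \<and> C p}. x p * F (g p))" by (rule sum.cong) (auto simp: at)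
  also have "\<dots> = (\<Sum>p\<in>{p. x p \<noteq> 0}. x p * (if C p then F (g p) else 0))"
  proof -
    have "{p. x p \<noteq> 0 \<and> C p} = {p \<in> {p. x p \<noteq> 0}. C p}" by auto
    then show ?thesis using sum.inter_filter[OF fx, of "\<lambda>p. x p * F (g p)" C]
      by (simp add: if_distrib cong: if_cong)
  qed
  finally show "lin F y = lin (\<lambda>p. if C p then F (g p) else 0) x" unfolding lin_def .
qed

lemma amult_pp_l: "ptgt tgt t = fst q \<Longrightarrow> amult tgt (pvec q) (pvec t) = (pvec (pcomp q t) :: _ \<Rightarrow> 'k::field)"
proof (rule ext)
  fix u assume c: "ptgt tgt t = fst q"
  show "amult tgt (pvec q) (pvec t) u = (pvec (pcomp q t) u :: 'k)"
  proof (cases "u = pcomp q t")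
    case True
    have "amult tgt (pvec q) (pvec t) (pcomp q t) = (pvec t t :: 'k)" by (rule amult_left_at[OF c])
    then show ?thesis using True by (simp add: pvec_def)
  next
    case False
    have "amult tgt (pvec q) (pvec t) u = (0::'k)"
    proof (rule ccontr)
      assume "amult tgt (pvec q) (pvec t) u \<noteq> (0::'k)"
      then obtain p where "u = pcomp q p" "pvec t p \<noteq> (0::'k)" using amult_left_ex by blast
      then show False using False by (simp add: pvec_def split: if_splits)
    qed
    then show ?thesis using False by (simp add: pvec_def)
  qed
qed

lemma amult_pp_r: "fst t = ptgt tgt r \<Longrightarrow> amult tgt (pvec t) (pvec r) = (pvec (pcomp t r) :: _ \<Rightarrow> 'k::field)"
proof (rule ext)
  fix u assume c: "fst t = ptgt tgt r"
  show "amult tgt (pvec t) (pvec r) u = (pvec (pcomp t r) u :: 'k)"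
  proof (cases "u = pcomp t r")
    case True
    have "amult tgt (pvec t) (pvec r) (pcomp t r) = (pvec t t :: 'k)" by (rule amult_right_at[OF c])
    then show ?thesis using True by (simp add: pvec_def)
  next
    case False
    have "amult tgt (pvec t) (pvec r) u = (0::'k)"
    proof (rule ccontr)
      assume "amult tgt (pvec t) (pvec r) u \<noteq> (0::'k)"
      then obtain p where "u = pcomp p r" "pvec t p \<noteq> (0::'k)" using amult_right_ex by blast
      then show False using False by (simp add: pvec_def split: if_splits)
    qed
    then show ?thesis using False by (simp add: pvec_def)
  qed
qed

lemma amult_l_diff: "amult tgt (pvec q) (\<lambda>x. f x - g x) = (\<lambda>u. amult tgt (pvec q) f u - amult tgt (pvec q) g u)"
  by (rule ext) (simp add: amult_left)
lemma amult_r_diff: "amult tgt (\<lambda>x. f x - g x) (pvec r) = (\<lambda>u. amult tgt f (pvec r) u - amult tgt g (pvec r) u)"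
  by (rule ext) (simp add: amult_right)
lemma amult_l_zero: "amult tgt (pvec q) (\<lambda>_. 0) = (\<lambda>_. 0)"
  by (rule ext) (simp add: amult_left)
lemma amult_r_zero: "amult tgt (\<lambda>_. 0) (pvec r) = (\<lambda>_. 0)"
  by (rule ext) (simp add: amult_right)

lemma ig_diff: "x \<in> ideal_gen valid tgt G \<Longrightarrow> y \<in> ideal_gen valid tgt G \<Longrightarrow> (\<lambda>p. x p - y p) \<in> ideal_gen valid tgt G"
proof -
  assume x: "x \<in> ideal_gen valid tgt G" and y: "y \<in> ideal_gen valid tgt G"
  have "(\<lambda>p. x p + (-1) * y p) \<in> ideal_gen valid tgt G"
    by (rule ideal_gen.add[OF x ideal_gen.smult[OF y]])
  then show ?thesis by simp
qed

lemma ig_addf: "x \<in> ideal_gen valid tgt G \<Longrightarrow> y \<in> ideal_gen valid tgt G \<Longrightarrow> (\<lambda>p. x p + y p) \<in> ideal_gen valid tgt G"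
  by (rule ideal_gen.add)

lemma ig_sum:
  assumes "finite S" "\<And>i. i \<in> S \<Longrightarrow> g i \<in> ideal_gen valid tgt G"
  shows "(\<lambda>p. \<Sum>i\<in>S. c i * g i p) \<in> ideal_gen valid tgt G"
  using assms
proof (induct S rule: finite_induct)
  case empty then show ?case by (simp add: ideal_gen.zero)
next
  case (insert a S)
  have "(\<lambda>p. c a * g a p + (\<Sum>i\<in>S. c i * g i p)) \<in> ideal_gen valid tgt G"
    by (rule ideal_gen.add[OF ideal_gen.smult]) (use insert in auto)
  then show ?case using insert by simp
qed

lemma ig_sandwich:
  "x \<in> ideal_gen valid tgt G \<Longrightarrow> valid q \<Longrightarrow> valid r \<Longrightarrow>
   amult tgt (amult tgt (pvec q) x) (pvec r) \<in> ideal_gen valid tgt G"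
  by (rule ideal_gen.rmult[OF ideal_gen.lmult])

lemma ig_mono:
  assumes "x \<in> ideal_gen valid tgt G" "\<And>p. valid p \<Longrightarrow> valid' p" "\<And>g. g \<in> G \<Longrightarrow> g \<in> ideal_gen valid' tgt G'"
  shows "x \<in> ideal_gen valid' tgt G'"
  using assms(1)
proof (induct rule: ideal_gen.induct)
  case zero then show ?case by (rule ideal_gen.zero)
next
  case (gen g) then show ?case using assms(3) by blast
next
  case (add x y) then show ?case by (blast intro: ideal_gen.add)
next
  case (smult x c) then show ?case by (blast intro: ideal_gen.smult)
next
  case (lmult x q) then show ?case using assms(2) by (blast intro: ideal_gen.lmult)
next
  case (rmult x q) then show ?case using assms(2) by (blast intro: ideal_gen.rmult)
qed

lemma pa_lmult:
  assumes x: "x \<in> path_alg valid" and q: "valid q"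
    and comp: "\<And>q p. valid q \<Longrightarrow> valid p \<Longrightarrow> ptgt tgt p = fst q \<Longrightarrow> valid (pcomp q p)"
  shows "amult tgt (pvec q) x \<in> path_alg valid"
proof -
  have fx: "finite {p. x p \<noteq> 0}" using x by (simp add: path_alg_def)
  have "{u. amult tgt (pvec q) x u \<noteq> 0} \<subseteq> pcomp q ` {p. x p \<noteq> 0}"
    using amult_left_ex by blast
  then have "finite {u. amult tgt (pvec q) x u \<noteq> 0}" using fx finite_subset by blast
  moreover have "\<forall>u. amult tgt (pvec q) x u \<noteq> 0 \<longrightarrow> valid u"
  proof (intro allI impI)
    fix u assume "amult tgt (pvec q) x u \<noteq> 0"
    then obtain p where pp: "ptgt tgt p = fst q" "u = pcomp q p" "x p \<noteq> 0" using amult_left_ex by blast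
    then have "valid p" using x unfolding path_alg_def by blast
    then show "valid u" using comp[OF q _ pp(1)] pp(2) by simp
  qed
  ultimately show ?thesis by (simp add: path_alg_def)
qed

lemma pa_rmult:
  assumes x: "x \<in> path_alg valid" and r: "valid r"
    and comp: "\<And>q p. valid q \<Longrightarrow> valid p \<Longrightarrow> ptgt tgt p = fst q \<Longrightarrow> valid (pcomp q p)"
  shows "amult tgt x (pvec r) \<in> path_alg valid"
proof -
  have fx: "finite {p. x p \<noteq> 0}" using x by (simp add: path_alg_def)
  have "{u. amult tgt x (pvec r) u \<noteq> 0} \<subseteq> (\<lambda>p. pcomp p r) ` {p. x p \<noteq> 0}"
    using amult_right_ex by blast
  then have "finite {u. amult tgt x (pvec r) u \<noteq> 0}" using fx finite_subset by blast
  moreover have "\<forall>u. amult tgt x (pvec r) u \<noteq> 0 \<longrightarrow> valid u"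
  proof (intro allI impI)
    fix u assume "amult tgt x (pvec r) u \<noteq> 0"
    then obtain p where pp: "fst p = ptgt tgt r" "u = pcomp p r" "x p \<noteq> 0" using amult_right_ex by blast
    then have "valid p" using x unfolding path_alg_def by blast
    then show "valid u" using comp[OF _ r] pp(1,2) by simp
  qed
  ultimately show ?thesis by (simp add: path_alg_def)
qed

lemma ig_path_alg:
  assumes "x \<in> ideal_gen valid tgt G" "\<And>g. g \<in> G \<Longrightarrow> g \<in> path_alg valid"
    and comp: "\<And>q p. valid q \<Longrightarrow> valid p \<Longrightarrow> ptgt tgt p = fst q \<Longrightarrow> valid (pcomp q p)"
  shows "x \<in> path_alg valid"
  using assms(1)
proof (induct rule: ideal_gen.induct)
  case zero then show ?case by (simp add: path_alg_def)
next
  case (gen g) then show ?case using assms(2) by blast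
next
  case (add x y)
  have "finite {p. x p + y p \<noteq> 0}" using add fin_add unfolding path_alg_def by blast
  moreover have "\<forall>p. x p + y p \<noteq> 0 \<longrightarrow> valid p"
  proof (intro allI impI)
    fix p assume "x p + y p \<noteq> 0"
    then have "x p \<noteq> 0 \<or> y p \<noteq> 0" by auto
    then show "valid p" using add unfolding path_alg_def by blast
  qed
  ultimately show ?case unfolding path_alg_def by blast
next
  case (smult x c)
  have "finite {p. c * x p \<noteq> 0}" using smult fin_smult unfolding path_alg_def by blast
  moreover have "\<forall>p. c * x p \<noteq> 0 \<longrightarrow> valid p"
  proof (intro allI impI)
    fix p assume "c * x p \<noteq> 0"
    then have "x p \<noteq> 0" by auto
    then show "valid p" using smult unfolding path_alg_def by blast
  qed
  ultimately show ?case unfolding path_alg_def by blast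
next
  case (lmult x q) then show ?case using pa_lmult comp by blast
next
  case (rmult x q) then show ?case using pa_rmult comp by blast
qed



context BG
begin

abbreviation "tgtQ \<equiv> btgt \<iota> \<rho>"
abbreviation "srcQ \<equiv> bsrc \<iota>"
abbreviation "EQ \<equiv> edges H \<iota>"
abbreviation "ArrQ' \<equiv> arrowsQ' H s m V1"
abbreviation "vA A \<equiv> valid_path EQ A srcQ tgtQ"
abbreviation "RR \<equiv> R_Gamma H s \<iota> \<rho> m V1 V2"

lemma bsrc_E: "h \<in> H \<Longrightarrow> bsrc \<iota> h \<in> edges H \<iota>"
  by (auto simp: bsrc_def edges_def)
lemma btgt_E: "h \<in> H \<Longrightarrow> btgt \<iota> \<rho> h \<in> edges H \<iota>"
  using rho_H by (auto simp: btgt_def edges_def)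
lemma bsrc_iota: "h \<in> H \<Longrightarrow> bsrc \<iota> (\<iota> h) = bsrc \<iota> h"
  by (auto simp: bsrc_def)
lemma btgt_sg: "h \<in> H \<Longrightarrow> btgt \<iota> \<rho> (sg h) = bsrc \<iota> h"
  by (simp add: btgt_def bsrc_def)
lemma btgt_rho: "btgt \<iota> \<rho> b = bsrc \<iota> (\<rho> b)"
  by (simp add: btgt_def bsrc_def)

lemma tgt_A: "A \<subseteq> H \<Longrightarrow> \<forall>a\<in>A. tgtQ a \<in> EQ"
  using btgt_E by blast

lemma Arr'_H: "ArrQ' \<subseteq> H" by (auto simp: arrowsQ'_def)
lemma Arr'_V2: "h \<in> H \<Longrightarrow> s h \<in> V2 \<Longrightarrow> h \<in> ArrQ'"
  using notV12 by (auto simp: arrowsQ'_def)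
lemma Arr'_nt: "h \<in> ArrQ' \<Longrightarrow> s h \<in> V1 \<Longrightarrow> \<not> truncated H s m (s h)"
  by (auto simp: arrowsQ'_def)
lemma Arr'_I: "h \<in> H \<Longrightarrow> \<not> (s h \<in> V1 \<and> truncated H s m (s h)) \<Longrightarrow> h \<in> ArrQ'"
  by (auto simp: arrowsQ'_def)

lemma vQ_def': "validQ H \<iota> \<rho> = vA H" by (simp add: validQ_def)
lemma vQ'_def': "validQ' H s \<iota> \<rho> m V1 = vA ArrQ'" by (simp add: validQ'_def)

lemma vA_mono: "A \<subseteq> B \<Longrightarrow> vA A p \<Longrightarrow> vA B p"
  by (auto simp: valid_path_def)

lemma vA_H: "vA A p \<Longrightarrow> set (snd p) \<subseteq> A" by (simp add: valid_path_def)

lemma chain_valid: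
  assumes c: "chain xs" and A: "set xs \<subseteq> A"
  shows "vA A (mkP \<iota> xs)"
proof -
  have ne: "xs \<noteq> []" and H: "set xs \<subseteq> H" using c by (auto simp: chain_def)
  have "last xs \<in> H" using chain_last_H[OF c] .
  then have e: "bsrc \<iota> (last xs) \<in> EQ" by (rule bsrc_E)
  have adj: "\<forall>i. Suc i < length xs \<longrightarrow> srcQ (xs ! i) = tgtQ (xs ! Suc i)"
    using c by (simp add: chain_def btgt_rho)
  show ?thesis using e A adj by (simp add: valid_path_def mkP_def)
qed

lemma vA_comp: "vA A q \<Longrightarrow> vA A p \<Longrightarrow> ptgt tgtQ p = fst q \<Longrightarrow> vA A (pcomp q p)"
  by (rule vp_comp)

lemma vA_adj:
  assumes "vA A (x, ql @ [a, b] @ rl)" shows "tgtQ b = srcQ a"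
proof -
  have "Suc (length ql) < length (ql @ [a, b] @ rl)" by simp
  then have "srcQ ((ql @ [a, b] @ rl) ! length ql) = tgtQ ((ql @ [a, b] @ rl) ! Suc (length ql))"
    using assms unfolding valid_path_def by (metis snd_conv)
  then show ?thesis by (simp add: nth_append)
qed

lemma vA_fst: "vA A (x, xs) \<Longrightarrow> xs \<noteq> [] \<Longrightarrow> x = srcQ (last xs)"
  by (simp add: valid_path_def)

lemma vA_mkP: "vA A p \<Longrightarrow> snd p \<noteq> [] \<Longrightarrow> p = mkP \<iota> (snd p)"
  by (cases p) (simp add: valid_path_def mkP_def)

lemma trunc_Kv: "truncated H s m v \<Longrightarrow> Kv v = 1"
  by (simp add: truncated_def Kv_def)
lemma nontrunc_Kv: "h \<in> H \<Longrightarrow> \<not> truncated H s m (s h) \<Longrightarrow> Kv (s h) \<ge> 2"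
proof -
  assume h: "h \<in> H" "\<not> truncated H s m (s h)"
  have "m (s h) \<ge> 1" "valency H s (s h) \<ge> 1" using m_pos[OF h(1)] val_pos[OF h(1)] by auto
  moreover have "\<not> (m (s h) = 1 \<and> valency H s (s h) = 1)" using h(2) by (simp add: truncated_def)
  note facts = calculation
  show ?thesis
  proof (cases "m (s h) \<ge> 2")
    case True
    have "2 * 1 \<le> m (s h) * valency H s (s h)"
      by (rule mult_le_mono) (use True \<open>valency H s (s h) \<ge> 1\<close> in auto)
    then show ?thesis by (simp add: Kv_def)
  next
    case False
    then have "m (s h) = 1" using \<open>m (s h) \<ge> 1\<close> by simp
    then have "valency H s (s h) \<ge> 2" using \<open>\<not> (m (s h) = 1 \<and> valency H s (s h) = 1)\<close>
      \<open>valency H s (s h) \<ge> 1\<close> by simp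
    then show ?thesis using \<open>m (s h) = 1\<close> by (simp add: Kv_def)
  qed
qed

lemma Cy_fst: "h \<in> H \<Longrightarrow> fst (mkP \<iota> (Cy h)) = bsrc \<iota> h"
  using Cy_props by (simp add: mkP_def)
lemma Cy_tgt: "h \<in> H \<Longrightarrow> ptgt tgtQ (mkP \<iota> (Cy h)) = bsrc \<iota> h"
  using Cy_props[of h] by (simp add: mkP_def ptgt_def btgt_sg)
lemma Cy_iota_fst: "h \<in> H \<Longrightarrow> fst (mkP \<iota> (Cy (\<iota> h))) = fst (mkP \<iota> (Cy h))"
  using Cy_fst iota_H bsrc_iota by simp
lemma Cy_iota_tgt: "h \<in> H \<Longrightarrow> ptgt tgtQ (mkP \<iota> (Cy (\<iota> h))) = ptgt tgtQ (mkP \<iota> (Cy h))"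
  using Cy_tgt iota_H bsrc_iota by simp

lemma chain_vertex_sub:
  assumes c: "chain (a @ X @ b)" and X: "X \<noteq> []"
  shows "s (last X) = s (last (a @ X @ b))"
  using chain_s[OF c] X by simp

definition Nl :: "'h list \<Rightarrow> ('h set, 'h) path \<Rightarrow> 'k::field" where
  "Nl as = (if chain as then
      (if s (last as) \<in> V2 then (if length as \<le> Kv (s (last as)) then pvec (mkP \<iota> as) else (\<lambda>_. 0))
       else if length as < Kv (s (last as)) then pvec (mkP \<iota> as)
       else if length as = Kv (s (last as)) then pvec (mkP \<iota> (Cy (\<iota> (last as))))
       else (\<lambda>_. 0))
    else (\<lambda>_. 0))"

definition Np :: "('h set, 'h) path \<Rightarrow> ('h set, 'h) path \<Rightarrow> 'k::field" where
  "Np p = (if snd p = [] then pvec p else Nl (snd p))"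

lemma Nl_I: "a \<noteq> \<rho> b \<Longrightarrow> Nl (ql @ [a, b] @ rl) = (\<lambda>_. 0)"
  using chain_pair by (auto simp: Nl_def)

lemma Nl_b:
  assumes h: "h \<in> H" "s h \<in> V2"
  shows "Nl (ql @ Bl h @ rl) = (\<lambda>_. 0)"
proof (cases "chain (ql @ Bl h @ rl)")
  case True
  have bne: "Bl h \<noteq> []" using Bl_props(1)[OF h(1)] by (simp add: chain_def)
  have v: "s (last (ql @ Bl h @ rl)) = s h" using chain_vertex_sub[OF True bne] Bl_props(2)[OF h(1)] by simp
  have "length (ql @ Bl h @ rl) > Kv (s h)" using Bl_props(3)[OF h(1)] by simp
  then show ?thesis using v h(2) True by (simp add: Nl_def)
qed (simp add: Nl_def)

lemma Nl_II:
  assumes h: "h \<in> H" "s h \<in> V1"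
  shows "(Nl (ql @ Cy h @ rl) :: _ \<Rightarrow> 'k::field) = Nl (ql @ Cy (\<iota> h) @ rl)"
proof -
  have ih: "\<iota> h \<in> H" using iota_H[OF h(1)] .
  have v2: "s (\<iota> h) \<in> V2" using sV1_iota[OF h] .
  have nv2: "s h \<notin> V2" using notV12 h(2) by blast
  have ne1: "Cy h \<noteq> []" and ne2: "Cy (\<iota> h) \<noteq> []" using Cy_props h(1) ih by auto
  show ?thesis
  proof (cases "ql = [] \<and> rl = []")
    case True
    have "(Nl (Cy h) :: _ \<Rightarrow> 'k) = pvec (mkP \<iota> (Cy (\<iota> h)))"
      using Cy_props[OF h(1)] nv2 by (simp add: Nl_def)
    moreover have "(Nl (Cy (\<iota> h)) :: _ \<Rightarrow> 'k) = pvec (mkP \<iota> (Cy (\<iota> h)))"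
      using Cy_props[OF ih] v2 by (simp add: Nl_def)
    ultimately show ?thesis using True by simp
  next
    case False
    have l1: "length (ql @ Cy h @ rl) > Kv (s h)" using False Cy_props(4)[OF h(1)] by auto
    have l2: "length (ql @ Cy (\<iota> h) @ rl) > Kv (s (\<iota> h))" using False Cy_props(4)[OF ih] by auto
    have "(Nl (ql @ Cy h @ rl) :: _ \<Rightarrow> 'k) = (\<lambda>_. 0)"
    proof (cases "chain (ql @ Cy h @ rl)")
      case True
      have "s (last (ql @ Cy h @ rl)) = s h" using chain_vertex_sub[OF True ne1] Cy_props(2)[OF h(1)] by simp
      then show ?thesis using True l1 nv2 by (simp add: Nl_def)
    qed (simp add: Nl_def)
    moreover have "(Nl (ql @ Cy (\<iota> h) @ rl) :: _ \<Rightarrow> 'k) = (\<lambda>_. 0)"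
    proof (cases "chain (ql @ Cy (\<iota> h) @ rl)")
      case True
      have "s (last (ql @ Cy (\<iota> h) @ rl)) = s (\<iota> h)" using chain_vertex_sub[OF True ne2] Cy_props(2)[OF ih] by simp
      then show ?thesis using True l2 v2 by (simp add: Nl_def)
    qed (simp add: Nl_def)
    ultimately show ?thesis by simp
  qed
qed

lemma Nl_II': "h \<in> H \<Longrightarrow> (Nl (ql @ Cy h @ rl) :: _ \<Rightarrow> 'k::field) = Nl (ql @ Cy (\<iota> h) @ rl)"
proof -
  assume h: "h \<in> H"
  show ?thesis
  proof (cases "s h \<in> V1")
    case True then show ?thesis using Nl_II h by blast
  next
    case False
    then have "s h \<in> V2" using sV12[OF h] by blast
    then have "s (\<iota> h) \<in> V1" using sV2_iota h by blast
    then have "(Nl (ql @ Cy (\<iota> h) @ rl) :: _ \<Rightarrow> 'k) = Nl (ql @ Cy (\<iota> (\<iota> h)) @ rl)"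
      using Nl_II[of "\<iota> h"] iota_H[OF h] by blast
    then show ?thesis using h by simp
  qed
qed

end


context BG
begin

lemma R_cases:
  assumes "(t, \<phi>) \<in> RR"
  obtains (a) h where "h \<in> H" "s h \<in> V1" "\<not> truncated H s m (s h)" "t = mkP \<iota> (Cy h)" "\<phi> = pvec (mkP \<iota> (Cy (\<iota> h)))"
  | (b) h where "h \<in> H" "s h \<in> V2" "t = mkP \<iota> (Bl h)" "\<phi> = (\<lambda>_. 0)"
  | (c) a b where "a \<in> ArrQ'" "b \<in> ArrQ'" "tgtQ b = srcQ a" "sg a \<noteq> b" "t = mkP \<iota> [a, b]" "\<phi> = (\<lambda>_. 0)"
  using assms unfolding R_Gamma_def Cy_def Bl_def by blast

lemma R_a: "h \<in> H \<Longrightarrow> s h \<in> V1 \<Longrightarrow> \<not> truncated H s m (s h) \<Longrightarrow>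
   (mkP \<iota> (Cy h), pvec (mkP \<iota> (Cy (\<iota> h)))) \<in> RR"
  using sV1_iota unfolding R_Gamma_def Cy_def by blast
lemma R_b: "h \<in> H \<Longrightarrow> s h \<in> V2 \<Longrightarrow> (mkP \<iota> (Bl h), (\<lambda>_. 0)) \<in> RR"
  unfolding R_Gamma_def Bl_def by blast
lemma R_c: "a \<in> ArrQ' \<Longrightarrow> b \<in> ArrQ' \<Longrightarrow> tgtQ b = srcQ a \<Longrightarrow> sg a \<noteq> b \<Longrightarrow> (mkP \<iota> [a, b], (\<lambda>_. 0)) \<in> RR"
  unfolding R_Gamma_def by blast

lemma sg_neq_rho: "b \<in> H \<Longrightarrow> sg a \<noteq> b \<Longrightarrow> a \<noteq> \<rho> b"
  using sg_rho by blast

lemma R_info: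
  assumes "(t, \<phi>) \<in> RR"
  shows "t = mkP \<iota> (snd t) \<and> length (snd t) \<ge> 2 \<and>
    (chain (snd t) \<longrightarrow> (s (last (snd t)) \<in> V1 \<and> length (snd t) = Kv (s (last (snd t)))) \<or>
                        (s (last (snd t)) \<in> V2 \<and> length (snd t) = Suc (Kv (s (last (snd t)))))) \<and>
    (\<not> chain (snd t) \<longrightarrow> length (snd t) = 2)"
  using assms
proof (cases rule: R_cases)
  case (a h)
  have "length (snd t) \<ge> 2" using a Cy_props(4)[OF a(1)] nontrunc_Kv[OF a(1,3)] by (simp add: mkP_def)
  then show ?thesis using a Cy_props[OF a(1)] by (simp add: mkP_def)
next
  case (b h)
  have "length (snd t) \<ge> 2" using b Bl_props(3)[OF b(1)] Kv_pos[OF b(1)] by (simp add: mkP_def)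
  then show ?thesis using b Bl_props[OF b(1)] by (simp add: mkP_def)
next
  case (c a b)
  have "b \<in> H" using c(2) Arr'_H by blast
  then have "a \<noteq> \<rho> b" using c(4) sg_neq_rho by blast
  then have "\<not> chain [a, b]" using chain_pair[of "[]" a b "[]"] by auto
  then show ?thesis using c by (simp add: mkP_def)
qed

lemma R_info1: "(t, \<phi>) \<in> RR \<Longrightarrow> t = mkP \<iota> (snd t)" using R_info by blast
lemma R_info2: "(t, \<phi>) \<in> RR \<Longrightarrow> length (snd t) \<ge> 2" using R_info by blast
lemma R_info3: "(t, \<phi>) \<in> RR \<Longrightarrow> chain (snd t) \<Longrightarrow>
   (s (last (snd t)) \<in> V1 \<and> length (snd t) = Kv (s (last (snd t)))) \<or>
   (s (last (snd t)) \<in> V2 \<and> length (snd t) = Suc (Kv (s (last (snd t)))))" using R_info by blast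
lemma R_info4: "(t, \<phi>) \<in> RR \<Longrightarrow> \<not> chain (snd t) \<Longrightarrow> length (snd t) = 2" using R_info by blast

definition good :: "'h list \<Rightarrow> bool" where
  "good xs \<longleftrightarrow> chain xs \<and> (s (last xs) \<in> V2 \<longrightarrow> length xs \<le> Kv (s (last xs))) \<and>
     (s (last xs) \<in> V1 \<longrightarrow> length xs < Kv (s (last xs)))"

lemma infix_len_eq: "ys = a @ xs @ b \<Longrightarrow> length xs = length ys \<Longrightarrow> xs = ys"
  by simp

lemma good_irred:
  assumes g: "good xs"
  shows "irreducible_path (RR :: (_ \<times> (_ \<Rightarrow> 'k::field)) set) (x, xs)"
  unfolding irreducible_path_def
proof
  assume "\<exists>sp\<in>(RR :: (_ \<times> (_ \<Rightarrow> 'k::field)) set). subpath (fst sp) (x, xs)"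
  then obtain sp where spR: "sp \<in> (RR :: (_ \<times> (_ \<Rightarrow> 'k::field)) set)" and sub: "subpath (fst sp) (x, xs)" by blast
  define t where "t = fst sp"
  have tR: "(t, snd sp) \<in> (RR :: (_ \<times> (_ \<Rightarrow> 'k::field)) set)" using spR unfolding t_def by simp
  obtain a b where xs: "xs = a @ snd t @ b" using sub unfolding t_def subpath_def by auto
  have c: "chain xs" using g by (simp add: good_def)
  have tl2: "length (snd t) \<ge> 2" using R_info2[OF tR] .
  then have tne: "snd t \<noteq> []" by auto
  have ct: "chain (snd t)" using chain_infix[OF c[unfolded xs] tne] .
  have v: "s (last (snd t)) = s (last xs)" using chain_vertex_sub[OF c[unfolded xs] tne] xs by simp
  have lle: "length (snd t) \<le> length xs" using xs by simp
  have g2: "s (last xs) \<in> V2 \<longrightarrow> length xs \<le> Kv (s (last xs))" "s (last xs) \<in> V1 \<longrightarrow> length xs < Kv (s (last xs))"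
    using g by (simp_all add: good_def)
  from R_info3[OF tR ct] show False
  proof
    assume "s (last (snd t)) \<in> V1 \<and> length (snd t) = Kv (s (last (snd t)))"
    then show False using v lle g2(2) by simp
  next
    assume "s (last (snd t)) \<in> V2 \<and> length (snd t) = Suc (Kv (s (last (snd t))))"
    then show False using v lle g2(1) by simp
  qed
qed

lemma trivial_irred: "irreducible_path (RR :: (_ \<times> (_ \<Rightarrow> 'k::field)) set) (x, [])"
  unfolding irreducible_path_def
proof
  assume "\<exists>sp\<in>(RR :: (_ \<times> (_ \<Rightarrow> 'k::field)) set). subpath (fst sp) (x, [])"
  then obtain sp where spR: "sp \<in> (RR :: (_ \<times> (_ \<Rightarrow> 'k::field)) set)" and sub: "subpath (fst sp) (x, [])" by blast
  have "(fst sp, snd sp) \<in> (RR :: (_ \<times> (_ \<Rightarrow> 'k::field)) set)" using spR by simp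
  then have "length (snd (fst sp)) \<ge> 2" by (rule R_info2)
  moreover have "snd (fst sp) = []" using sub unfolding subpath_def by auto
  ultimately show False by simp
qed

lemma good_Arr':
  assumes g: "good xs" shows "set xs \<subseteq> ArrQ'"
proof
  fix e assume e: "e \<in> set xs"
  have c: "chain xs" using g by (simp add: good_def)
  have eH: "e \<in> H" using chain_H[OF c e] .
  have se: "s e = s (last xs)" using chain_s[OF c e] .
  show "e \<in> ArrQ'"
  proof (cases "s e \<in> V1")
    case True
    have "length xs < Kv (s (last xs))" using g True se by (simp add: good_def)
    moreover have "length xs \<ge> 1" using c by (simp add: chain_def Suc_le_eq)
    ultimately have "\<not> truncated H s m (s e)"
    proof -
      assume a1: "length xs < Kv (s (last xs))" and a2: "length xs \<ge> 1"
      show ?thesis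
      proof
        assume "truncated H s m (s e)"
        then have "Kv (s e) = 1" by (rule trunc_Kv)
        then show False using a1 a2 se by simp
      qed
    qed
    then show ?thesis using Arr'_I[OF eH] by blast
  next
    case False
    then have "s e \<in> V2" using sV12[OF eH] by blast
    then show ?thesis using Arr'_V2[OF eH] by blast
  qed
qed

lemma good_valid: "good xs \<Longrightarrow> vA ArrQ' (mkP \<iota> xs)"
  using chain_valid good_Arr' by (simp add: good_def)

lemma good_Cy_iota:
  assumes h: "h \<in> H" "s h \<in> V1" shows "good (Cy (\<iota> h))"
proof -
  have ih: "\<iota> h \<in> H" using iota_H[OF h(1)] .
  have v2: "s (\<iota> h) \<in> V2" using sV1_iota[OF h] .
  have nv1: "s (\<iota> h) \<notin> V1" using v2 notV12 by blast
  show ?thesis using Cy_props[OF ih] v2 nv1 by (simp add: good_def)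
qed

lemma good_Cy_V2:
  assumes h: "h \<in> H" "s h \<in> V2" shows "good (Cy h)"
proof -
  have nv1: "s h \<notin> V1" using h(2) notV12 by blast
  show ?thesis using Cy_props[OF h(1)] h(2) nv1 by (simp add: good_def)
qed

lemma Nl_nc: "\<not> chain as \<Longrightarrow> Nl as = (\<lambda>_. 0)" by (simp add: Nl_def)
lemma Nl_V2: "chain as \<Longrightarrow> s (last as) \<in> V2 \<Longrightarrow>
  Nl as = (if length as \<le> Kv (s (last as)) then pvec (mkP \<iota> as) else (\<lambda>_. 0))" by (simp add: Nl_def)
lemma Nl_V1: "chain as \<Longrightarrow> s (last as) \<notin> V2 \<Longrightarrow>
  Nl as = (if length as < Kv (s (last as)) then pvec (mkP \<iota> as)
       else if length as = Kv (s (last as)) then pvec (mkP \<iota> (Cy (\<iota> (last as))))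
       else (\<lambda>_. 0))" by (simp add: Nl_def)

lemma pvec_nz: "(pvec a :: _ \<Rightarrow> 'k::field) v \<noteq> 0 \<Longrightarrow> v = a"
  by (simp add: pvec_def split: if_splits)

lemma Nl_cases:
  fixes as :: "'h list"
  assumes nz: "(Nl as :: _ \<Rightarrow> 'k::field) v \<noteq> 0"
  shows "(good as \<and> v = mkP \<iota> as) \<or> (chain as \<and> s (last as) \<in> V1 \<and> length as = Kv (s (last as)) \<and> v = mkP \<iota> (Cy (\<iota> (last as))))"
proof -
  have c: "chain as"
  proof (rule ccontr)
    assume "\<not> chain as"
    then have "(Nl as :: _ \<Rightarrow> 'k::field) = (\<lambda>_. 0)" by (rule Nl_nc)
    then show False using nz by simp
  qed
  have lH: "last as \<in> H" using chain_last_H[OF c] .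
  show ?thesis
  proof (cases "s (last as) \<in> V2")
    case True
    note e = Nl_V2[OF c True]
    show ?thesis
    proof (cases "length as \<le> Kv (s (last as))")
      case l: True
      then have "(pvec (mkP \<iota> as) :: _ \<Rightarrow> 'k) v \<noteq> 0" using l nz by (simp add: e)
      then have "v = mkP \<iota> as" by (rule pvec_nz)
      then show ?thesis using True l c notV12 unfolding good_def by blast
    next
      case False then show ?thesis using False nz by (simp add: e)
    qed
  next
    case False
    then have v1: "s (last as) \<in> V1" using sV12[OF lH] by blast
    note e = Nl_V1[OF c False]
    show ?thesis
    proof (cases "length as < Kv (s (last as))")
      case l: True
      then have "(pvec (mkP \<iota> as) :: _ \<Rightarrow> 'k) v \<noteq> 0" using l nz by (simp add: e)
      then have "v = mkP \<iota> as" by (rule pvec_nz)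
      then show ?thesis using l c False unfolding good_def by blast
    next
      case nl: False
      show ?thesis
      proof (cases "length as = Kv (s (last as))")
        case l: True
        then have "(pvec (mkP \<iota> (Cy (\<iota> (last as)))) :: _ \<Rightarrow> 'k) v \<noteq> 0" using l nl nz by (simp add: e)
        then have "v = mkP \<iota> (Cy (\<iota> (last as)))" by (rule pvec_nz)
        then show ?thesis using c v1 l by blast
      next
        case False then show ?thesis using False nl nz by (simp add: e)
      qed
    qed
  qed
qed

lemma Np_out:
  assumes p: "vA H p" and nz: "(Np p :: _ \<Rightarrow> 'k::field) v \<noteq> 0"
  shows "vA ArrQ' v \<and> irreducible_path (RR :: (_ \<times> (_ \<Rightarrow> 'k)) set) v"
proof (cases "snd p = []")
  case True
  then have "v = p" using nz by (simp add: Np_def pvec_def split: if_splits)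
  moreover obtain x where "p = (x, [])" using True by (cases p) auto
  moreover have "x \<in> EQ" if "p = (x, [])" using p that by (simp add: valid_path_def)
  ultimately show ?thesis using trivial_irred[of x] by (auto simp: valid_path_def)
next
  case False
  then have "(Nl (snd p) :: _ \<Rightarrow> 'k) v \<noteq> 0" using nz by (simp add: Np_def)
  from Nl_cases[OF this] show ?thesis
  proof
    assume a: "good (snd p) \<and> v = mkP \<iota> (snd p)"
    have "vA ArrQ' (mkP \<iota> (snd p))" using a good_valid by blast
    moreover have "irreducible_path (RR :: (_ \<times> (_ \<Rightarrow> 'k)) set) (mkP \<iota> (snd p))"
      unfolding mkP_def by (rule good_irred) (use a in blast)
    ultimately show ?thesis using a by simp
  next
    assume a: "chain (snd p) \<and> s (last (snd p)) \<in> V1 \<and> length (snd p) = Kv (s (last (snd p))) \<and>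
      v = mkP \<iota> (Cy (\<iota> (last (snd p))))"
    have g: "good (Cy (\<iota> (last (snd p))))" using good_Cy_iota chain_last_H a by blast
    have "vA ArrQ' (mkP \<iota> (Cy (\<iota> (last (snd p)))))" using g good_valid by blast
    moreover have "irreducible_path (RR :: (_ \<times> (_ \<Rightarrow> 'k)) set) (mkP \<iota> (Cy (\<iota> (last (snd p)))))"
      unfolding mkP_def by (rule good_irred[OF g])
    ultimately show ?thesis using a by simp
  qed
qed

lemma suffix_split: "k \<le> length xs \<Longrightarrow> xs = take (length xs - k) xs @ drop (length xs - k) xs \<and> length (drop (length xs - k) xs) = k"
  by simp

lemma chain_suffix_eq:
  assumes c: "chain xs" and k: "0 < k" "k \<le> length xs" and c2: "chain ys" "length ys = k" "last ys = last xs"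
  shows "xs = take (length xs - k) xs @ ys"
proof -
  let ?d = "drop (length xs - k) xs"
  have sp: "xs = take (length xs - k) xs @ ?d" by simp
  have dne: "?d \<noteq> []" using k by simp
  have cd: "chain ?d" using chain_suffix[of "take (length xs - k) xs" ?d] c dne by simp
  have "last ?d = last xs" using dne last_appendR[of ?d "take (length xs - k) xs"] by simp
  then have "?d = ys" using chain_eq[OF cd c2(1)] c2 k by simp
  then show ?thesis using sp by simp
qed

lemma irr_contra:
  assumes "irreducible_path R p" "(t, \<phi>) \<in> R" "subpath t p" shows False
proof -
  have "\<exists>sp\<in>R. subpath (fst sp) p" using assms(2,3) by (intro bexI[of _ "(t, \<phi>)"]) simp_all
  then show False using assms(1) unfolding irreducible_path_def by blast
qed

lemma subpath_suffix: "snd p = a @ xs \<Longrightarrow> subpath (mkP \<iota> xs) p"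
  unfolding subpath_def mkP_def by (intro exI[of _ a] exI[of _ "[]"]) simp

lemma Np_irred:
  assumes p: "vA ArrQ' p" and irr: "irreducible_path (RR :: (_ \<times> (_ \<Rightarrow> 'k::field)) set) p"
  shows "(Np p :: _ \<Rightarrow> 'k) = pvec p"
proof (cases "snd p = []")
  case True then show ?thesis by (simp add: Np_def)
next
  case False
  obtain x as where pp: "p = (x, as)" by (cases p)
  have ne: "as \<noteq> []" using False pp by simp
  have aA: "set as \<subseteq> ArrQ'" using p pp by (simp add: valid_path_def)
  have aH: "set as \<subseteq> H" using aA Arr'_H by blast
  have x: "x = srcQ (last as)" using vA_fst[of ArrQ' x as] p pp ne by simp
  have c: "chain as"
  proof (rule ccontr)
    assume "\<not> chain as"
    then obtain a' x' y' c' where d: "as = a' @ [x', y'] @ c'" "x' \<noteq> \<rho> y'" using not_chain[OF ne aH] by blast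
    have xy: "x' \<in> ArrQ'" "y' \<in> ArrQ'" using aA d by auto
    have adj: "tgtQ y' = srcQ x'" using vA_adj[of ArrQ' x a' x' y' c'] p pp d by simp
    have xH: "x' \<in> H" using xy(1) Arr'_H by blast
    have "sg x' \<noteq> y'"
    proof
      assume "sg x' = y'"
      then have "\<rho> y' = x'" using rho_sg[OF xH] by simp
      then show False using d(2) by simp
    qed
    then have R: "(mkP \<iota> [x', y'], (\<lambda>_. 0)) \<in> (RR :: (_ \<times> (_ \<Rightarrow> 'k::field)) set)" using R_c xy adj by blast
    have "subpath (mkP \<iota> [x', y']) p" using d pp unfolding subpath_def mkP_def by auto
    then show False using irr_contra[OF irr R] by blast
  qed
  let ?h = "last as"
  have hA: "?h \<in> ArrQ'" using aA ne by auto
  have hH: "?h \<in> H" using chain_last_H[OF c] .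
  have "good as"
  proof (cases "s ?h \<in> V2")
    case True
    have "length as \<le> Kv (s ?h)"
    proof (rule ccontr)
      assume "\<not> length as \<le> Kv (s ?h)"
      then have le: "Suc (Kv (s ?h)) \<le> length as" by simp
      have e: "as = take (length as - Suc (Kv (s ?h))) as @ Bl ?h"
        by (rule chain_suffix_eq[OF c _ le Bl_props(1)[OF hH] Bl_props(3)[OF hH] Bl_props(2)[OF hH]]) simp
      have sub: "subpath (mkP \<iota> (Bl ?h)) p" using e pp subpath_suffix[of p _ "Bl ?h"] by simp
      have R: "(mkP \<iota> (Bl ?h), (\<lambda>_. 0)) \<in> (RR :: (_ \<times> (_ \<Rightarrow> 'k::field)) set)" using R_b hH True by blast
      show False using irr_contra[OF irr R sub] .
    qed
    then show ?thesis using True c notV12 unfolding good_def by blast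
  next
    case False
    then have v1: "s ?h \<in> V1" using sV12[OF hH] by blast
    have nt: "\<not> truncated H s m (s ?h)" using Arr'_nt[OF hA v1] .
    have "length as < Kv (s ?h)"
    proof (rule ccontr)
      assume "\<not> length as < Kv (s ?h)"
      then have le: "Kv (s ?h) \<le> length as" by simp
      have e: "as = take (length as - Kv (s ?h)) as @ Cy ?h"
        by (rule chain_suffix_eq[OF c Kv_pos[OF hH] le Cy_props(1)[OF hH] Cy_props(4)[OF hH] Cy_props(2)[OF hH]])
      have sub: "subpath (mkP \<iota> (Cy ?h)) p" using e pp subpath_suffix[of p _ "Cy ?h"] by simp
      have R: "(mkP \<iota> (Cy ?h), pvec (mkP \<iota> (Cy (\<iota> ?h)))) \<in> (RR :: (_ \<times> (_ \<Rightarrow> 'k::field)) set)"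
        using R_a hH v1 nt by blast
      show False using irr_contra[OF irr R sub] .
    qed
    then show ?thesis using False c unfolding good_def by blast
  qed
  then have "(Nl as :: _ \<Rightarrow> 'k) = pvec (mkP \<iota> as)" using sV12[OF hH] unfolding good_def Nl_def by auto
  then show ?thesis using pp ne x by (simp add: Np_def mkP_def)
qed

end


context BG
begin

lemma Cy_Arr': "h \<in> H \<Longrightarrow> s h \<in> V1 \<Longrightarrow> \<not> truncated H s m (s h) \<Longrightarrow> set (Cy h) \<subseteq> ArrQ'"
proof
  fix e assume h: "h \<in> H" "s h \<in> V1" "\<not> truncated H s m (s h)" and e: "e \<in> set (Cy h)"
  have eH: "e \<in> H" using e Cy_props(6)[OF h(1)] by blast
  have "s e = s h" using chain_s[OF Cy_props(1)[OF h(1)] e] Cy_props(2)[OF h(1)] by simp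
  then show "e \<in> ArrQ'" using Arr'_I[OF eH] h by simp
qed

lemma Bl_Arr': "h \<in> H \<Longrightarrow> s h \<in> V2 \<Longrightarrow> set (Bl h) \<subseteq> ArrQ'"
proof
  fix e assume h: "h \<in> H" "s h \<in> V2" and e: "e \<in> set (Bl h)"
  have c: "chain (Bl h)" using Bl_props(1)[OF h(1)] .
  have eH: "e \<in> H" using chain_H[OF c e] .
  have "s e = s h" using chain_s[OF c e] Bl_props(2)[OF h(1)] by simp
  then show "e \<in> ArrQ'" using Arr'_V2[OF eH] h by simp
qed

lemma pair_valid: "a \<in> A \<Longrightarrow> b \<in> A \<Longrightarrow> A \<subseteq> H \<Longrightarrow> tgtQ b = srcQ a \<Longrightarrow> vA A (mkP \<iota> [a, b])"
proof -
  assume a: "a \<in> A" "b \<in> A" "A \<subseteq> H" "tgtQ b = srcQ a"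
  have "srcQ b \<in> EQ" using a bsrc_E by blast
  then show ?thesis using a by (simp add: valid_path_def mkP_def nth_Cons')
qed

lemma pvec_path_alg: "valid p \<Longrightarrow> (pvec p :: _ \<Rightarrow> 'k::field) \<in> path_alg valid"
proof -
  assume v: "valid p"
  have "{u. (pvec p :: _ \<Rightarrow> 'k) u \<noteq> 0} = {p}" by (auto simp: pvec_def)
  moreover have "\<forall>u. (pvec p :: _ \<Rightarrow> 'k) u \<noteq> 0 \<longrightarrow> valid u" using v pvec_nz by metis
  ultimately show ?thesis unfolding path_alg_def by simp
qed

lemma zero_path_alg: "(\<lambda>_. 0 :: 'k::field) \<in> path_alg valid"
  by (simp add: path_alg_def)

lemma RS_part1:
  assumes tR: "(t, \<phi>) \<in> (RR :: (_ \<times> (_ \<Rightarrow> 'k::field)) set)"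
  shows "vA ArrQ' t \<and> length (snd t) \<ge> 2 \<and> \<phi> \<in> path_alg (vA ArrQ') \<and>
     (\<forall>u. \<phi> u \<noteq> 0 \<longrightarrow> fst u = fst t \<and> ptgt tgtQ u = ptgt tgtQ t \<and> irreducible_path (RR :: (_ \<times> (_ \<Rightarrow> 'k::field)) set) u)"
proof -
  have l2: "length (snd t) \<ge> 2" using R_info2[OF tR] .
  from tR show ?thesis
  proof (cases rule: R_cases)
    case (a h)
    have vt: "vA ArrQ' t" using chain_valid[OF Cy_props(1)[OF a(1)] Cy_Arr'[OF a(1,2,3)]] a(4) by simp
    have g: "good (Cy (\<iota> h))" using good_Cy_iota a(1,2) by blast
    have vphi: "\<phi> \<in> path_alg (vA ArrQ')" using a(5) pvec_path_alg good_valid[OF g] by blast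
    have "\<forall>u. \<phi> u \<noteq> 0 \<longrightarrow> fst u = fst t \<and> ptgt tgtQ u = ptgt tgtQ t \<and> irreducible_path (RR :: (_ \<times> (_ \<Rightarrow> 'k::field)) set) u"
    proof (intro allI impI)
      fix u assume "\<phi> u \<noteq> 0"
      then have u: "u = mkP \<iota> (Cy (\<iota> h))" using a(5) pvec_nz by metis
      have "irreducible_path (RR :: (_ \<times> (_ \<Rightarrow> 'k::field)) set) (mkP \<iota> (Cy (\<iota> h)))"
        unfolding mkP_def by (rule good_irred[OF g])
      then show "fst u = fst t \<and> ptgt tgtQ u = ptgt tgtQ t \<and> irreducible_path (RR :: (_ \<times> (_ \<Rightarrow> 'k::field)) set) u"
        using u a(4) Cy_iota_fst[OF a(1)] Cy_iota_tgt[OF a(1)] by simp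
    qed
    then show ?thesis using vt l2 vphi by blast
  next
    case (b h)
    have vt: "vA ArrQ' t" using chain_valid[OF Bl_props(1)[OF b(1)] Bl_Arr'[OF b(1,2)]] b(3) by simp
    then show ?thesis using l2 b(4) zero_path_alg by simp
  next
    case (c a b)
    have vt: "vA ArrQ' t" using pair_valid[OF c(1,2) Arr'_H c(3)] c(5) by simp
    then show ?thesis using l2 c(6) zero_path_alg by simp
  qed
qed

lemma RS_part2:
  assumes tR: "(t, \<phi>) \<in> (RR :: (_ \<times> (_ \<Rightarrow> 'k::field)) set)" and tR': "(t', \<phi>') \<in> (RR :: (_ \<times> (_ \<Rightarrow> 'k::field)) set)"
    and sub: "subpath t t'"
  shows "t = t'"
proof -
  obtain a b where e: "snd t' = a @ snd t @ b" using sub by (auto simp: subpath_def)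
  have l2: "length (snd t) \<ge> 2" using R_info2[OF tR] .
  then have tne: "snd t \<noteq> []" by auto
  have len: "length (snd t) = length (snd t')"
  proof (cases "chain (snd t')")
    case True
    have ct: "chain (snd t)" using chain_infix[OF True[unfolded e] tne] .
    have v: "s (last (snd t)) = s (last (snd t'))" using chain_vertex_sub[OF True[unfolded e] tne] e by simp
    have lH: "last (snd t) \<in> H" using chain_last_H[OF ct] .
    show ?thesis using R_info3[OF tR ct] R_info3[OF tR' True] v notV12 by auto
  next
    case False
    then have "length (snd t') = 2" using R_info4[OF tR'] by blast
    then show ?thesis using l2 e by simp
  qed
  then have "snd t = snd t'" using e by simp
  then show ?thesis using R_info1[OF tR] R_info1[OF tR'] by metis
qed

lemma RS: "reduction_system (vA ArrQ') tgtQ (RR :: (_ \<times> (_ \<Rightarrow> 'k::field)) set)"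
  unfolding reduction_system_def
proof (intro conjI)
  show "\<forall>(t, \<phi>)\<in>(RR :: (_ \<times> (_ \<Rightarrow> 'k::field)) set). vA ArrQ' t \<and> 2 \<le> length (snd t) \<and> \<phi> \<in> path_alg (vA ArrQ') \<and>
     (\<forall>u. \<phi> u \<noteq> 0 \<longrightarrow> fst u = fst t \<and> ptgt tgtQ u = ptgt tgtQ t \<and> irreducible_path (RR :: (_ \<times> (_ \<Rightarrow> 'k::field)) set) u)"
    using RS_part1 by blast
  show "\<forall>(t, \<phi>)\<in>(RR :: (_ \<times> (_ \<Rightarrow> 'k::field)) set). \<forall>(t', \<phi>')\<in>(RR :: (_ \<times> (_ \<Rightarrow> 'k::field)) set). t \<noteq> t' \<longrightarrow> \<not> subpath t t'"
    using RS_part2 by blast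
qed

end


context BG
begin

abbreviation "GR \<equiv> {(\<lambda>x. pvec t x - \<phi> x) | t \<phi>. (t, \<phi>) \<in> RR}"

lemma IQ_eq: "I_Gamma H s \<iota> \<rho> m = ideal_gen (vA H) tgtQ
     ({pvec (mkP \<iota> [a, b]) | a b. a \<in> H \<and> b \<in> H \<and> btgt \<iota> \<rho> b = bsrc \<iota> a \<and> b \<noteq> bsigma H \<rho> a} \<union>
      {(\<lambda>x. pvec (mkP \<iota> (ppow (cyc_at H s \<rho> h) (m (s h)))) x
            - pvec (mkP \<iota> (ppow (cyc_at H s \<rho> (\<iota> h)) (m (s (\<iota> h))))) x) | h. h \<in> H})"
  by (simp add: I_Gamma_def validQ_def)

lemma G1_I: "a \<in> H \<Longrightarrow> b \<in> H \<Longrightarrow> tgtQ b = srcQ a \<Longrightarrow> a \<noteq> \<rho> b \<Longrightarrow>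
  (pvec (mkP \<iota> [a, b]) :: _ \<Rightarrow> 'k::field) \<in> I_Gamma H s \<iota> \<rho> m"
proof -
  assume a: "a \<in> H" "b \<in> H" "tgtQ b = srcQ a" "a \<noteq> \<rho> b"
  have "b \<noteq> sg a"
  proof
    assume "b = sg a" then have "\<rho> b = a" using rho_sg[OF a(1)] by simp
    then show False using a(4) by simp
  qed
  then show ?thesis unfolding IQ_eq using a by (intro ideal_gen.gen) blast
qed

lemma G3_I: "h \<in> H \<Longrightarrow>
  (\<lambda>x. (pvec (mkP \<iota> (Cy h)) :: _ \<Rightarrow> 'k::field) x - pvec (mkP \<iota> (Cy (\<iota> h))) x) \<in> I_Gamma H s \<iota> \<rho> m"
  unfolding IQ_eq Cy_def by (intro ideal_gen.gen) blast

lemma G1_R: "a \<in> ArrQ' \<Longrightarrow> b \<in> ArrQ' \<Longrightarrow> tgtQ b = srcQ a \<Longrightarrow> a \<noteq> \<rho> b \<Longrightarrow>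
  (pvec (mkP \<iota> [a, b]) :: _ \<Rightarrow> 'k::field) \<in> ideal_gen (vA ArrQ') tgtQ GR"
proof -
  assume a: "a \<in> ArrQ'" "b \<in> ArrQ'" "tgtQ b = srcQ a" "a \<noteq> \<rho> b"
  have aH: "a \<in> H" using a(1) Arr'_H by blast
  have "sg a \<noteq> b"
  proof
    assume "sg a = b" then have "\<rho> b = a" using rho_sg[OF aH] by simp
    then show False using a(4) by simp
  qed
  then have R: "(mkP \<iota> [a, b], (\<lambda>_. 0 :: 'k)) \<in> RR" using R_c a by blast
  have "(\<lambda>x. (pvec (mkP \<iota> [a, b]) :: _ \<Rightarrow> 'k) x - (\<lambda>_. 0) x) \<in> GR"
    using R by (intro CollectI exI[of _ "mkP \<iota> [a, b]"] exI[of _ "\<lambda>_. 0::'k"]) simp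
  then have "(\<lambda>x. (pvec (mkP \<iota> [a, b]) :: _ \<Rightarrow> 'k) x - (\<lambda>_. 0) x) \<in> ideal_gen (vA ArrQ') tgtQ GR"
    by (rule ideal_gen.gen)
  then show ?thesis by simp
qed

lemma G2_R: "h \<in> H \<Longrightarrow> s h \<in> V2 \<Longrightarrow> (pvec (mkP \<iota> (Bl h)) :: _ \<Rightarrow> 'k::field) \<in> ideal_gen (vA ArrQ') tgtQ GR"
proof -
  assume a: "h \<in> H" "s h \<in> V2"
  then have R: "(mkP \<iota> (Bl h), (\<lambda>_. 0 :: 'k)) \<in> RR" using R_b by blast
  have "(\<lambda>x. (pvec (mkP \<iota> (Bl h)) :: _ \<Rightarrow> 'k) x - (\<lambda>_. 0) x) \<in> GR"
    using R by (intro CollectI exI[of _ "mkP \<iota> (Bl h)"] exI[of _ "\<lambda>_. 0::'k"]) simp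
  then have "(\<lambda>x. (pvec (mkP \<iota> (Bl h)) :: _ \<Rightarrow> 'k) x - (\<lambda>_. 0) x) \<in> ideal_gen (vA ArrQ') tgtQ GR"
    by (rule ideal_gen.gen)
  then show ?thesis by simp
qed

lemma G3_R: "h \<in> ArrQ' \<Longrightarrow> s h \<in> V1 \<Longrightarrow>
  (\<lambda>x. (pvec (mkP \<iota> (Cy h)) :: _ \<Rightarrow> 'k::field) x - pvec (mkP \<iota> (Cy (\<iota> h))) x) \<in> ideal_gen (vA ArrQ') tgtQ GR"
proof -
  assume a: "h \<in> ArrQ'" "s h \<in> V1"
  have hH: "h \<in> H" using a(1) Arr'_H by blast
  have "(mkP \<iota> (Cy h), (pvec (mkP \<iota> (Cy (\<iota> h))) :: _ \<Rightarrow> 'k)) \<in> RR" using R_a[OF hH a(2) Arr'_nt[OF a]] .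
  then show ?thesis by (intro ideal_gen.gen) blast
qed

lemma infix_J:
  assumes A: "A \<subseteq> H" and v: "vA A (x, ql @ sl @ rl)" and ne: "sl \<noteq> []"
    and g: "(pvec (mkP \<iota> sl) :: _ \<Rightarrow> 'k::field) \<in> ideal_gen (vA A) tgtQ G"
  shows "(pvec (x, ql @ sl @ rl) :: _ \<Rightarrow> 'k) \<in> ideal_gen (vA A) tgtQ G"
proof -
  have tA: "\<forall>a\<in>A. tgtQ a \<in> EQ" using tgt_A[OF A] .
  have v1: "vA A (x, sl @ rl)" "vA A (ptgt tgtQ (x, sl @ rl), ql)" using vp_split[OF v tA] by auto
  have v2: "vA A (x, rl)" "vA A (ptgt tgtQ (x, rl), sl)" using vp_split[OF v1(1) tA] by auto
  define r where "r = (x, rl)"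
  define t where "t = (ptgt tgtQ r, sl)"
  define q where "q = (ptgt tgtQ (x, sl @ rl), ql)"
  have tm: "t = mkP \<iota> sl" using vA_mkP[of A t] v2(2) ne unfolding t_def r_def by simp
  have c1: "ptgt tgtQ t = fst q" using ne unfolding t_def q_def by (simp add: ptgt_def)
  have c2: "fst (pcomp q t) = ptgt tgtQ r" unfolding t_def by simp
  have "amult tgtQ (amult tgtQ (pvec q) (pvec t)) (pvec r) \<in> ideal_gen (vA A) tgtQ G"
    by (rule ig_sandwich) (use g tm v1(2) v2(1) q_def r_def in auto)
  also have "amult tgtQ (amult tgtQ (pvec q) (pvec t)) (pvec r) = (pvec (pcomp (pcomp q t) r) :: _ \<Rightarrow> 'k)"
    by (simp add: amult_pp_l[OF c1] amult_pp_r[OF c2])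
  also have "pcomp (pcomp q t) r = (x, ql @ sl @ rl)" unfolding q_def t_def r_def by (simp add: pcomp_def)
  finally show ?thesis .
qed

lemma nonchain_J:
  assumes A: "A \<subseteq> H"
    and G1: "\<And>a b. a \<in> A \<Longrightarrow> b \<in> A \<Longrightarrow> tgtQ b = srcQ a \<Longrightarrow> a \<noteq> \<rho> b \<Longrightarrow>
        (pvec (mkP \<iota> [a, b]) :: _ \<Rightarrow> 'k::field) \<in> ideal_gen (vA A) tgtQ G"
    and v: "vA A p" and ne: "snd p \<noteq> []" and nc: "\<not> chain (snd p)"
  shows "(pvec p :: _ \<Rightarrow> 'k) \<in> ideal_gen (vA A) tgtQ G"
proof -
  obtain x as where pp: "p = (x, as)" by (cases p)
  have sA: "set as \<subseteq> A" using v pp by (simp add: valid_path_def)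
  have ne': "as \<noteq> []" using ne pp by simp
  have nc': "\<not> chain as" using nc pp by simp
  have sH: "set as \<subseteq> H" using sA A by blast
  obtain a' x' y' c' where d: "as = a' @ [x', y'] @ c'" "x' \<noteq> \<rho> y'"
    using not_chain[OF ne' sH nc'] by blast
  have xy: "x' \<in> A" "y' \<in> A" using sA d by auto
  have adj: "tgtQ y' = srcQ x'" using vA_adj[of A x a' x' y' c'] v pp d by simp
  have "(pvec (mkP \<iota> [x', y']) :: _ \<Rightarrow> 'k) \<in> ideal_gen (vA A) tgtQ G" using G1 xy adj d(2) by blast
  then have "(pvec (x, a' @ [x', y'] @ c') :: _ \<Rightarrow> 'k) \<in> ideal_gen (vA A) tgtQ G"
    by (intro infix_J[OF A]) (use v pp d in auto)
  then show ?thesis using pp d by simp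
qed

lemma G2_I:
  assumes h: "h \<in> H" "s h \<in> V2"
  shows "(pvec (mkP \<iota> (Bl h)) :: _ \<Rightarrow> 'k::field) \<in> I_Gamma H s \<iota> \<rho> m"
proof -
  define g where "g = \<rho> h"
  have gH: "g \<in> H" using rho_H[OF h(1)] unfolding g_def .
  have igH: "\<iota> g \<in> H" using iota_H[OF gH] .
  define B where "B = Cy (\<iota> g)"
  define r where "r = mkP \<iota> [h]"
  have vr: "vA H r" unfolding r_def using chain_valid[OF chain_single[OF h(1)]] h(1) by simp
  have D: "(\<lambda>x. (pvec (mkP \<iota> (Cy g)) :: _ \<Rightarrow> 'k) x - pvec (mkP \<iota> B) x) \<in> I_Gamma H s \<iota> \<rho> m"
    unfolding B_def by (rule G3_I[OF gH])
  have ptr: "ptgt tgtQ r = bsrc \<iota> g" unfolding r_def g_def by (simp add: ptgt_def mkP_def btgt_rho)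
  have f1: "fst (mkP \<iota> (Cy g)) = ptgt tgtQ r" using Cy_fst[OF gH] ptr by simp
  have f2: "fst (mkP \<iota> B) = ptgt tgtQ r" using Cy_fst[OF igH] ptr bsrc_iota[OF gH] unfolding B_def by simp
  have "amult tgtQ (\<lambda>x. (pvec (mkP \<iota> (Cy g)) :: _ \<Rightarrow> 'k) x - pvec (mkP \<iota> B) x) (pvec r) \<in> I_Gamma H s \<iota> \<rho> m"
    using D vr unfolding IQ_eq by (rule ideal_gen.rmult)
  also have "amult tgtQ (\<lambda>x. (pvec (mkP \<iota> (Cy g)) :: _ \<Rightarrow> 'k) x - pvec (mkP \<iota> B) x) (pvec r) =
     (\<lambda>u. pvec (pcomp (mkP \<iota> (Cy g)) r) u - pvec (pcomp (mkP \<iota> B) r) u)"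
    unfolding amult_r_diff amult_pp_r[OF f1] amult_pp_r[OF f2] ..
  finally have d1: "(\<lambda>u. (pvec (pcomp (mkP \<iota> (Cy g)) r) :: _ \<Rightarrow> 'k) u - pvec (pcomp (mkP \<iota> B) r) u) \<in> I_Gamma H s \<iota> \<rho> m" .
  have e1: "pcomp (mkP \<iota> (Cy g)) r = mkP \<iota> (Bl h)"
    unfolding r_def g_def Bl_def Cy_def using h(1) by (simp add: pcomp_def mkP_def)
  have Bne: "B \<noteq> []" and Blast: "last B = \<iota> g" and Bc: "chain B" using Cy_props[OF igH] unfolding B_def by auto
  have Bsplit: "B = butlast B @ [\<iota> g]" using append_butlast_last_id[OF Bne] Blast by simp
  obtain B0 where B0: "B = B0 @ [\<iota> g]" using Bsplit by blast
  have vB: "vA H (mkP \<iota> B)" using chain_valid[OF Bc] chain_def Bc by blast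
  have vW: "vA H (pcomp (mkP \<iota> B) r)" by (rule vA_comp[OF vB vr]) (use f2 in simp)
  have W: "pcomp (mkP \<iota> B) r = (fst r, B0 @ [\<iota> g, h] @ [])"
    unfolding r_def by (simp add: pcomp_def B0 mkP_def)
  have adj: "tgtQ h = srcQ (\<iota> g)" unfolding g_def using bsrc_iota[OF gH] by (simp add: btgt_rho g_def)
  have neq: "\<iota> g \<noteq> \<rho> h" using iota_neq[OF gH] unfolding g_def by simp
  have "(pvec (mkP \<iota> [\<iota> g, h]) :: _ \<Rightarrow> 'k) \<in> I_Gamma H s \<iota> \<rho> m" using G1_I[OF igH h(1) adj neq] .
  moreover have "vA H (fst r, B0 @ [\<iota> g, h] @ [])" using vW W by simp
  ultimately have "(pvec (fst r, B0 @ [\<iota> g, h] @ []) :: _ \<Rightarrow> 'k) \<in> I_Gamma H s \<iota> \<rho> m"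
    unfolding IQ_eq using infix_J[OF order_refl] by blast
  then have d2: "(pvec (pcomp (mkP \<iota> B) r) :: _ \<Rightarrow> 'k) \<in> I_Gamma H s \<iota> \<rho> m" using W by simp
  have "(\<lambda>u. ((pvec (pcomp (mkP \<iota> (Cy g)) r) :: _ \<Rightarrow> 'k) u - pvec (pcomp (mkP \<iota> B) r) u) + pvec (pcomp (mkP \<iota> B) r) u)
     \<in> I_Gamma H s \<iota> \<rho> m"
    using d1 d2 unfolding IQ_eq by (rule ideal_gen.add)
  then show ?thesis using e1 by simp
qed

end


context BG
begin

lemma P4gen:
  fixes G :: "(('h set, 'h) path \<Rightarrow> 'k::field) set"
  assumes A: "A \<subseteq> H" and A2: "\<And>h. h \<in> H \<Longrightarrow> s h \<in> V2 \<Longrightarrow> h \<in> A"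
    and G1: "\<And>a b. a \<in> A \<Longrightarrow> b \<in> A \<Longrightarrow> tgtQ b = srcQ a \<Longrightarrow> a \<noteq> \<rho> b \<Longrightarrow>
        (pvec (mkP \<iota> [a, b]) :: _ \<Rightarrow> 'k) \<in> ideal_gen (vA A) tgtQ G"
    and G2: "\<And>h. h \<in> H \<Longrightarrow> s h \<in> V2 \<Longrightarrow> (pvec (mkP \<iota> (Bl h)) :: _ \<Rightarrow> 'k) \<in> ideal_gen (vA A) tgtQ G"
    and G3: "\<And>h. h \<in> A \<Longrightarrow> s h \<in> V1 \<Longrightarrow>
        (\<lambda>x. (pvec (mkP \<iota> (Cy h)) :: _ \<Rightarrow> 'k) x - pvec (mkP \<iota> (Cy (\<iota> h))) x) \<in> ideal_gen (vA A) tgtQ G"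
    and v: "vA A p"
  shows "(\<lambda>u. pvec p u - (Np p :: _ \<Rightarrow> 'k) u) \<in> ideal_gen (vA A) tgtQ G"
proof -
  let ?J = "ideal_gen (vA A) tgtQ G"
  have z: "(\<lambda>u. 0 :: 'k) \<in> ?J" by (rule ideal_gen.zero)
  show ?thesis
  proof (cases "snd p = []")
    case True then show ?thesis using z by (simp add: Np_def)
  next
    case False
    obtain x as where pp: "p = (x, as)" by (cases p)
    have ne: "as \<noteq> []" using False pp by simp
    have sA: "set as \<subseteq> A" using v pp by (simp add: valid_path_def)
    have x: "x = srcQ (last as)" using vA_fst[of A x as] v pp ne by simp
    have Npe: "(Np p :: _ \<Rightarrow> 'k) = Nl as" using pp ne by (simp add: Np_def)
    show ?thesis
    proof (cases "chain as")
      case False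
      have N0: "(Np p :: _ \<Rightarrow> 'k) = (\<lambda>_. 0)" unfolding Npe by (rule Nl_nc[OF False])
      have sp: "snd p = as" using pp by simp
      have P: "(pvec p :: _ \<Rightarrow> 'k) \<in> ?J" by (rule nonchain_J[OF A G1 v]) (simp_all only: sp ne False not_False_eq_True)
      have "(\<lambda>u. (pvec p :: _ \<Rightarrow> 'k) u - Np p u) = pvec p" unfolding N0 by simp
      then show ?thesis using P by simp
    next
      case c: True
      define h0 where "h0 = last as"
      have hH: "h0 \<in> H" using chain_last_H[OF c] unfolding h0_def .
      have hA: "h0 \<in> A" using sA ne unfolding h0_def by auto
      show ?thesis
      proof (cases "s h0 \<in> V2")
        case True
        note e = Nl_V2[OF c True[unfolded h0_def], folded h0_def]
        show ?thesis
        proof (cases "length as \<le> Kv (s h0)")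
          case True
          then have "(Np p :: _ \<Rightarrow> 'k) = pvec p" using Npe pp x by (simp add: e mkP_def)
          then show ?thesis using z by simp
        next
          case False
          then have N0: "(Np p :: _ \<Rightarrow> 'k) = (\<lambda>_. 0)" using Npe by (simp add: e)
          have le: "Suc (Kv (s h0)) \<le> length as" using False by simp
          have eq: "as = take (length as - Suc (Kv (s h0))) as @ Bl h0"
            by (rule chain_suffix_eq[OF c _ le Bl_props(1)[OF hH] Bl_props(3)[OF hH]]) (simp_all add: Bl_props(2)[OF hH] h0_def[symmetric])
          have "(pvec (x, take (length as - Suc (Kv (s h0))) as @ Bl h0 @ []) :: _ \<Rightarrow> 'k) \<in> ?J"
          proof (rule infix_J[OF A])
            show "vA A (x, take (length as - Suc (Kv (s h0))) as @ Bl h0 @ [])" using v pp eq by simp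
            show "Bl h0 \<noteq> []" by (simp add: Bl_def)
            show "(pvec (mkP \<iota> (Bl h0)) :: _ \<Rightarrow> 'k) \<in> ?J" using G2[OF hH True] .
          qed
          then have "(pvec p :: _ \<Rightarrow> 'k) \<in> ?J" using pp eq by simp
          then show ?thesis using N0 by simp
        qed
      next
        case False
        then have v1: "s h0 \<in> V1" using sV12[OF hH] by blast
        note e = Nl_V1[OF c False[unfolded h0_def], folded h0_def]
        consider "length as < Kv (s h0)" | "length as = Kv (s h0)" | "length as > Kv (s h0)" by linarith
        then show ?thesis
        proof cases
          case 1
          then have "(Np p :: _ \<Rightarrow> 'k) = pvec p" using Npe pp x by (simp add: e mkP_def)
          then show ?thesis using z by simp
        next
          case 2
          then have N: "(Np p :: _ \<Rightarrow> 'k) = pvec (mkP \<iota> (Cy (\<iota> h0)))" using Npe by (simp add: e)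
          have lc: "last (Cy h0) = last as" using Cy_props(2)[OF hH] h0_def by simp
          have asC: "as = Cy h0" using chain_eq[OF c Cy_props(1)[OF hH] _ lc[symmetric]] Cy_props(4)[OF hH] 2 by simp
          have x': "x = srcQ h0" using x h0_def by simp
          have "p = mkP \<iota> (Cy h0)" using pp x' Cy_props(2)[OF hH] by (simp add: mkP_def asC)
          then show ?thesis using N G3[OF hA v1] by simp
        next
          case 3
          then have N0: "(Np p :: _ \<Rightarrow> 'k) = (\<lambda>_. 0)" using Npe by (simp add: e)
          define pre where "pre = take (length as - Kv (s h0)) as"
          have eq: "as = pre @ Cy h0" unfolding pre_def
            by (rule chain_suffix_eq[OF c Kv_pos[OF hH] _ Cy_props(1)[OF hH] Cy_props(4)[OF hH]]) (use 3 Cy_props(2)[OF hH] h0_def[symmetric] in simp_all)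
          have prene: "pre \<noteq> []"
          proof
            assume "pre = []"
            then have "length as = Kv (s h0)" using eq Cy_props(4)[OF hH] by simp
            then show False using 3 by simp
          qed
          have tA: "\<forall>a\<in>A. tgtQ a \<in> EQ" using tgt_A[OF A] .
          have vfull: "vA A (x, pre @ Cy h0)" using v pp eq by simp
          have vS: "vA A (x, Cy h0)" and vq: "vA A (ptgt tgtQ (x, Cy h0), pre)"
            using vp_split[OF vfull tA] by auto
          define q where "q = (ptgt tgtQ (x, Cy h0), pre)"
          define S where "S = mkP \<iota> (Cy h0)"
          define Phi where "Phi = mkP \<iota> (Cy (\<iota> h0))"
          have Sx: "S = (x, Cy h0)" unfolding S_def mkP_def using x Cy_props(2)[OF hH] h0_def by simp
          have c1: "ptgt tgtQ S = fst q" unfolding q_def Sx by simp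
          have c2: "ptgt tgtQ Phi = fst q" using c1 Cy_iota_tgt[OF hH] unfolding Phi_def S_def by simp
          have g3: "(\<lambda>x. (pvec S :: _ \<Rightarrow> 'k) x - pvec Phi x) \<in> ?J" using G3[OF hA v1] unfolding S_def Phi_def .
          have "amult tgtQ (pvec q) (\<lambda>x. (pvec S :: _ \<Rightarrow> 'k) x - pvec Phi x) \<in> ?J"
            using g3 vq unfolding q_def by (rule ideal_gen.lmult)
          then have d1: "(\<lambda>u. (pvec (pcomp q S) :: _ \<Rightarrow> 'k) u - pvec (pcomp q Phi) u) \<in> ?J"
            by (simp add: amult_l_diff amult_pp_l[OF c1] amult_pp_l[OF c2])
          have pS: "pcomp q S = p" unfolding q_def Sx pp using eq by (simp add: pcomp_def)
          have ih: "\<iota> h0 \<in> H" using iota_H[OF hH] .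
          have v2: "s (\<iota> h0) \<in> V2" using sV1_iota[OF hH v1] .
          have PhiA: "set (Cy (\<iota> h0)) \<subseteq> A"
          proof
            fix e assume e: "e \<in> set (Cy (\<iota> h0))"
            have eH: "e \<in> H" using e Cy_props(6)[OF ih] by blast
            have "s e = s (\<iota> h0)" using chain_s[OF Cy_props(1)[OF ih] e] Cy_props(2)[OF ih] by simp
            then show "e \<in> A" using A2[OF eH] v2 by simp
          qed
          have vPhi: "vA A Phi" unfolding Phi_def using chain_valid[OF Cy_props(1)[OF ih] PhiA] .
          have vqP: "vA A (pcomp q Phi)" using vA_comp[OF vq[folded q_def] vPhi c2] .
          have nc: "\<not> chain (pre @ Cy (\<iota> h0))"
          proof
            assume cc: "chain (pre @ Cy (\<iota> h0))"
            have lp: "last pre \<in> set (pre @ Cy (\<iota> h0))" using prene by simp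
            have "s (last pre) = s (last (pre @ Cy (\<iota> h0)))" using chain_s[OF cc lp] .
            also have "\<dots> = s (\<iota> h0)" using Cy_props(2,5)[OF ih] by simp
            finally have a1: "s (last pre) = s (\<iota> h0)" .
            have "last pre \<in> set as" using eq prene by simp
            then have "s (last pre) = s h0" using chain_s[OF c] h0_def by blast
            then show False using a1 v1 v2 notV12 by simp
          qed
          have "(pvec (pcomp q Phi) :: _ \<Rightarrow> 'k) \<in> ?J"
            by (rule nonchain_J[OF A G1 vqP]) (use nc Cy_props(5)[OF ih] in \<open>simp_all add: q_def Phi_def mkP_def\<close>)
          then have "(\<lambda>u. ((pvec (pcomp q S) :: _ \<Rightarrow> 'k) u - pvec (pcomp q Phi) u) + pvec (pcomp q Phi) u) \<in> ?J"
            using d1 by (intro ideal_gen.add)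
          then show ?thesis using pS N0 by simp
        qed
      qed
    qed
  qed
qed

definition NL :: "(('h set, 'h) path \<Rightarrow> 'k::field) \<Rightarrow> ('h set, 'h) path \<Rightarrow> 'k" where
  "NL f = (\<lambda>u. lin (\<lambda>p. Np p u) f)"

lemma sum_pvec: "finite S \<Longrightarrow> {p. f p \<noteq> 0} \<subseteq> S \<Longrightarrow> (\<Sum>p\<in>S. f p * (pvec p u :: 'k::field)) = f u"
proof -
  assume fS: "finite S" "{p. f p \<noteq> 0} \<subseteq> S"
  have "(\<Sum>p\<in>S. f p * (pvec p u :: 'k)) = (\<Sum>p\<in>S. if p = u then f u else 0)"
    by (rule sum.cong) (auto simp: pvec_def)
  also have "\<dots> = (if u \<in> S then f u else 0)" using fS(1) by (simp add: sum.delta)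
  also have "\<dots> = f u" using fS(2) by auto
  finally show ?thesis .
qed

lemma lin_ext:
  fixes f :: "('h set, 'h) path \<Rightarrow> 'k::field"
  assumes D: "\<And>p. valid p \<Longrightarrow> (\<lambda>u. pvec p u - (Np p :: _ \<Rightarrow> 'k) u) \<in> ideal_gen valid tgt G"
    and f: "f \<in> path_alg valid"
  shows "(\<lambda>u. f u - NL f u) \<in> ideal_gen valid tgt G"
proof -
  let ?S = "{p. f p \<noteq> 0}"
  have fin: "finite ?S" and val: "\<And>p. p \<in> ?S \<Longrightarrow> valid p" using f by (auto simp: path_alg_def)
  have "(\<lambda>u. \<Sum>p\<in>?S. f p * (pvec p u - (Np p :: _ \<Rightarrow> 'k) u)) \<in> ideal_gen valid tgt G"
    by (rule ig_sum[OF fin]) (use D val in blast)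
  moreover have "(\<lambda>u. \<Sum>p\<in>?S. f p * (pvec p u - (Np p :: _ \<Rightarrow> 'k) u)) = (\<lambda>u. f u - NL f u)"
  proof
    fix u
    have "(\<Sum>p\<in>?S. f p * (pvec p u - (Np p :: _ \<Rightarrow> 'k) u)) = (\<Sum>p\<in>?S. f p * pvec p u) - (\<Sum>p\<in>?S. f p * Np p u)"
      by (simp add: right_diff_distrib sum_subtractf)
    also have "(\<Sum>p\<in>?S. f p * pvec p u) = f u" by (rule sum_pvec[OF fin]) simp
    also have "(\<Sum>p\<in>?S. f p * Np p u) = NL f u" by (simp add: NL_def lin_def)
    finally show "(\<Sum>p\<in>?S. f p * (pvec p u - (Np p :: _ \<Rightarrow> 'k) u)) = f u - NL f u" .
  qed
  ultimately show ?thesis by simp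
qed

lemma NL_id:
  fixes f :: "('h set, 'h) path \<Rightarrow> 'k::field"
  assumes f: "f \<in> path_alg (vA ArrQ')" and irr: "\<forall>u. f u \<noteq> 0 \<longrightarrow> irreducible_path (RR :: (_ \<times> (_ \<Rightarrow> 'k)) set) u"
  shows "NL f = f"
proof
  fix u
  let ?S = "{p. f p \<noteq> 0}"
  have fin: "finite ?S" and val: "\<And>p. p \<in> ?S \<Longrightarrow> vA ArrQ' p" using f by (auto simp: path_alg_def)
  have "NL f u = (\<Sum>p\<in>?S. f p * (Np p :: _ \<Rightarrow> 'k) u)" by (simp add: NL_def lin_def)
  also have "\<dots> = (\<Sum>p\<in>?S. f p * pvec p u)"
  proof (rule sum.cong)
    fix p assume "p \<in> ?S"
    then have "(Np p :: _ \<Rightarrow> 'k) = pvec p" using Np_irred[of p] val irr by blast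
    then show "f p * (Np p :: _ \<Rightarrow> 'k) u = f p * pvec p u" by simp
  qed simp
  also have "\<dots> = f u" by (rule sum_pvec[OF fin]) simp
  finally show "NL f u = f u" .
qed

lemma Np_form: "\<exists>w. (Np p :: _ \<Rightarrow> 'k::field) = (\<lambda>_. 0) \<or> (Np p :: _ \<Rightarrow> 'k) = pvec w"
proof (cases "snd p = []")
  case True then show ?thesis by (intro exI[of _ p]) (simp add: Np_def)
next
  case ne: False
  show ?thesis
  proof (cases "chain (snd p)")
    case False then show ?thesis using ne by (intro exI[of _ p]) (simp add: Np_def Nl_nc)
  next
    case c: True
    show ?thesis
    proof (cases "s (last (snd p)) \<in> V2")
      case True then show ?thesis using ne
        by (intro exI[of _ "mkP \<iota> (snd p)"]) (simp add: Np_def Nl_V2[OF c True])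
    next
      case nv: False
      show ?thesis
      proof (cases "length (snd p) = Kv (s (last (snd p)))")
        case True then show ?thesis using ne
          by (intro exI[of _ "mkP \<iota> (Cy (\<iota> (last (snd p))))"]) (simp add: Np_def Nl_V1[OF c nv])
      next
        case False then show ?thesis using ne
          by (intro exI[of _ "mkP \<iota> (snd p)"]) (simp add: Np_def Nl_V1[OF c nv])
      qed
    qed
  qed
qed

lemma Np_single: "\<exists>w. \<forall>v. (Np p :: _ \<Rightarrow> 'k::field) v \<noteq> 0 \<longrightarrow> v = w"
proof -
  obtain w where w: "(Np p :: _ \<Rightarrow> 'k) = (\<lambda>_. 0) \<or> (Np p :: _ \<Rightarrow> 'k) = pvec w" using Np_form by blast
  have "\<forall>v. (Np p :: _ \<Rightarrow> 'k) v \<noteq> 0 \<longrightarrow> v = w"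
  proof (intro allI impI)
    fix v assume nz: "(Np p :: _ \<Rightarrow> 'k) v \<noteq> 0"
    from w show "v = w"
    proof
      assume "(Np p :: _ \<Rightarrow> 'k) = (\<lambda>_. 0)" then show ?thesis using nz by simp
    next
      assume "(Np p :: _ \<Rightarrow> 'k) = pvec w" then show ?thesis using nz pvec_nz by metis
    qed
  qed
  then show ?thesis by blast
qed

lemma NL_out:
  fixes f :: "('h set, 'h) path \<Rightarrow> 'k::field"
  assumes f: "f \<in> path_alg (vA H)"
  shows "NL f \<in> path_alg (vA ArrQ')" "\<forall>u. NL f u \<noteq> 0 \<longrightarrow> irreducible_path (RR :: (_ \<times> (_ \<Rightarrow> 'k)) set) u"
proof -
  let ?S = "{p. f p \<noteq> 0}"
  have fin: "finite ?S" and val: "\<And>p. p \<in> ?S \<Longrightarrow> vA H p" using f by (auto simp: path_alg_def)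
  have ex: "\<exists>p\<in>?S. (Np p :: _ \<Rightarrow> 'k) u \<noteq> 0" if "NL f u \<noteq> 0" for u
  proof -
    have "(\<Sum>p\<in>?S. f p * (Np p :: _ \<Rightarrow> 'k) u) \<noteq> 0" using that by (simp add: NL_def lin_def)
    then obtain p where "p \<in> ?S" "f p * (Np p :: _ \<Rightarrow> 'k) u \<noteq> 0" by (meson sum.neutral)
    then show ?thesis by (intro bexI[of _ p]) simp_all
  qed
  have "\<forall>p. \<exists>w. \<forall>v. (Np p :: _ \<Rightarrow> 'k) v \<noteq> 0 \<longrightarrow> v = w" using Np_single[where 'k='k] by blast
  then obtain w where w0: "\<forall>p. \<forall>v. (Np p :: _ \<Rightarrow> 'k) v \<noteq> 0 \<longrightarrow> v = w p" by (rule choice[THEN exE]) blast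
  have w: "\<And>p v. (Np p :: _ \<Rightarrow> 'k) v \<noteq> 0 \<Longrightarrow> v = w p" using w0 by blast
  have "{u. NL f u \<noteq> 0} \<subseteq> w ` ?S" using ex w by blast
  then have fin2: "finite {u. NL f u \<noteq> 0}" using fin finite_subset by blast
  have out: "vA ArrQ' u \<and> irreducible_path (RR :: (_ \<times> (_ \<Rightarrow> 'k)) set) u" if nz: "NL f u \<noteq> 0" for u
  proof -
    obtain p where "p \<in> ?S" "(Np p :: _ \<Rightarrow> 'k) u \<noteq> 0" using ex[OF nz] by blast
    then show ?thesis using Np_out[of p u] val by blast
  qed
  show "NL f \<in> path_alg (vA ArrQ')" using fin2 out by (simp add: path_alg_def)
  show "\<forall>u. NL f u \<noteq> 0 \<longrightarrow> irreducible_path (RR :: (_ \<times> (_ \<Rightarrow> 'k)) set) u" using out by blast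
qed

end


lemma lin_diff:
  assumes "finite {p. x p \<noteq> 0}" "finite {p. y p \<noteq> 0}"
  shows "lin F (\<lambda>p. x p - y p) = lin F x - lin F (y :: _ \<Rightarrow> 'k::field)"
proof -
  have "lin F (\<lambda>p. x p + (-1) * y p) = lin F x + lin F (\<lambda>p. (-1) * y p)"
    by (rule lin_add) (use assms fin_smult in auto)
  also have "lin F (\<lambda>p. (-1) * y p) = (-1) * lin F y" by (rule lin_smult[OF assms(2)])
  finally show ?thesis by simp
qed

lemma fin_pvec: "finite {u. (pvec p :: _ \<Rightarrow> 'k::field) u \<noteq> 0}"
  by (rule finite_subset[of _ "{p}"]) (auto simp: pvec_def)

lemma fin_diff: "finite {p. x p \<noteq> 0} \<Longrightarrow> finite {p. y p \<noteq> 0} \<Longrightarrow> finite {p. x p - y p \<noteq> (0::'k::field)}"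
  by (rule finite_subset[of _ "{p. x p \<noteq> 0} \<union> {p. y p \<noteq> 0}"]) auto

context BG
begin

definition okp :: "'h set option \<Rightarrow> 'h set option \<Rightarrow> ('h set, 'h) path \<Rightarrow> bool" where
  "okp o1 o2 p \<longleftrightarrow> (case o1 of None \<Rightarrow> True | Some e \<Rightarrow> ptgt tgtQ p = e) \<and> (case o2 of None \<Rightarrow> True | Some e \<Rightarrow> fst p = e)"

definition Gc :: "'h set option \<Rightarrow> 'h set option \<Rightarrow> 'h list \<Rightarrow> 'h list \<Rightarrow> ('h set, 'h) path \<Rightarrow> ('h set, 'h) path \<Rightarrow> 'k::field" where
  "Gc o1 o2 ql rl u p = (if okp o1 o2 p then (if ql @ snd p @ rl = [] then pvec p u else Nl (ql @ snd p @ rl) u) else 0)"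

definition Inv :: "(('h set, 'h) path \<Rightarrow> 'k::field) \<Rightarrow> bool" where
  "Inv x \<longleftrightarrow> finite {p. x p \<noteq> 0} \<and> (\<forall>o1 o2 ql rl u. lin (Gc o1 o2 ql rl u) x = 0)"

lemma Gc_l:
  assumes o1: "o1 = None \<or> o1 = Some (ptgt tgtQ q)"
  shows "(if ptgt tgtQ p = fst q then (Gc o1 o2 ql rl u (pcomp q p) :: 'k::field) else 0) = Gc (Some (fst q)) o2 (ql @ snd q) rl u p"
proof (cases "ptgt tgtQ p = fst q")
  case True
  have pt: "ptgt tgtQ (pcomp q p) = ptgt tgtQ q" using ptgt_comp_l[OF True] .
  have ok: "okp o1 o2 (pcomp q p) = okp (Some (fst q)) o2 p"
    using o1 pt True by (cases o2) (auto simp: okp_def)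
  have e: "ql @ snd (pcomp q p) @ rl = (ql @ snd q) @ snd p @ rl" by simp
  have pe: "ql @ snd (pcomp q p) @ rl = [] \<Longrightarrow> pcomp q p = p" by (cases p) (simp add: pcomp_def)
  show ?thesis using True ok pe unfolding Gc_def e by auto
next
  case False
  then show ?thesis by (simp add: Gc_def okp_def)
qed

lemma Gc_l0:
  assumes o1: "o1 = Some e" "e \<noteq> ptgt tgtQ q"
  shows "(if ptgt tgtQ p = fst q then (Gc o1 o2 ql rl u (pcomp q p) :: 'k::field) else 0) = 0"
proof (cases "ptgt tgtQ p = fst q")
  case True
  have pt: "ptgt tgtQ (pcomp q p) = ptgt tgtQ q" using ptgt_comp_l[OF True] .
  then show ?thesis using o1 by (simp add: Gc_def okp_def)
qed simp

lemma Gc_r: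
  assumes o2: "o2 = None \<or> o2 = Some (fst r)"
  shows "(if fst p = ptgt tgtQ r then (Gc o1 o2 ql rl u (pcomp p r) :: 'k::field) else 0) = Gc o1 (Some (ptgt tgtQ r)) ql (snd r @ rl) u p"
proof (cases "fst p = ptgt tgtQ r")
  case True
  have pt: "ptgt tgtQ (pcomp p r) = ptgt tgtQ p" using ptgt_comp_r[OF True] .
  have ok: "okp o1 o2 (pcomp p r) = okp o1 (Some (ptgt tgtQ r)) p"
    using o2 pt True by (cases o1) (auto simp: okp_def)
  have e: "ql @ snd (pcomp p r) @ rl = ql @ snd p @ snd r @ rl" by simp
  have pe: "ql @ snd (pcomp p r) @ rl = [] \<Longrightarrow> pcomp p r = p"
    using True by (cases p, cases r) (simp add: pcomp_def ptgt_def)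
  show ?thesis using True ok pe unfolding Gc_def e by auto
next
  case False
  then show ?thesis by (simp add: Gc_def okp_def)
qed

lemma Gc_r0:
  assumes o2: "o2 = Some e" "e \<noteq> fst r"
  shows "(if fst p = ptgt tgtQ r then (Gc o1 o2 ql rl u (pcomp p r) :: 'k::field) else 0) = 0"
  using o2 by (simp add: Gc_def okp_def)

lemma Inv_lmult:
  assumes I: "Inv (x :: _ \<Rightarrow> 'k::field)"
  shows "Inv (amult tgtQ (pvec q) x)"
proof -
  let ?y = "amult tgtQ (pvec q) x"
  let ?C = "\<lambda>p. ptgt tgtQ p = fst q"
  have fx: "finite {p. x p \<noteq> 0}" using I by (simp add: Inv_def)
  have inj: "inj_on (pcomp q) {p. x p \<noteq> 0 \<and> ?C p}"
  proof (rule inj_onI)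
    fix p p' assume "pcomp q p = pcomp q p'"
    then show "p = p'" by (rule pcomp_inj_l)
  qed
  have ex: "\<And>u. ?y u \<noteq> 0 \<Longrightarrow> \<exists>p. ?C p \<and> u = pcomp q p \<and> x p \<noteq> 0" using amult_left_ex by blast
  have at: "\<And>p. ?C p \<Longrightarrow> ?y (pcomp q p) = x p" using amult_left_at by blast
  note R = lin_reindex[OF fx inj ex at]
  have "lin (Gc o1 o2 ql rl u) ?y = 0" for o1 o2 ql rl u
  proof -
    have "lin (Gc o1 o2 ql rl u) ?y = lin (\<lambda>p. if ?C p then (Gc o1 o2 ql rl u (pcomp q p) :: 'k) else 0) x"
      using R(1) .
    also have "\<dots> = 0"
    proof (cases "o1 = None \<or> o1 = Some (ptgt tgtQ q)")
      case True
      have "lin (\<lambda>p. if ?C p then (Gc o1 o2 ql rl u (pcomp q p) :: 'k) else 0) x =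
            lin (Gc (Some (fst q)) o2 (ql @ snd q) rl u) x"
        by (simp add: Gc_l[OF True])
      also have "\<dots> = 0" using I unfolding Inv_def by blast
      finally show ?thesis .
    next
      case False
      then obtain e where "o1 = Some e" "e \<noteq> ptgt tgtQ q" by (cases o1) auto
      then show ?thesis using Gc_l0 by (intro lin_F0) blast
    qed
    finally show ?thesis .
  qed
  then show ?thesis using R(2) by (simp add: Inv_def)
qed

lemma Inv_rmult:
  assumes I: "Inv (x :: _ \<Rightarrow> 'k::field)"
  shows "Inv (amult tgtQ x (pvec r))"
proof -
  let ?y = "amult tgtQ x (pvec r)"
  let ?C = "\<lambda>p. fst p = ptgt tgtQ r"
  have fx: "finite {p. x p \<noteq> 0}" using I by (simp add: Inv_def)
  have inj: "inj_on (\<lambda>p. pcomp p r) {p. x p \<noteq> 0 \<and> ?C p}"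
  proof (rule inj_onI)
    fix p p' assume "p \<in> {p. x p \<noteq> 0 \<and> ?C p}" "p' \<in> {p. x p \<noteq> 0 \<and> ?C p}" "pcomp p r = pcomp p' r"
    then show "p = p'" using pcomp_inj_r[of p r p'] by simp
  qed
  have ex: "\<And>u. ?y u \<noteq> 0 \<Longrightarrow> \<exists>p. ?C p \<and> u = pcomp p r \<and> x p \<noteq> 0" using amult_right_ex by blast
  have at: "\<And>p. ?C p \<Longrightarrow> ?y (pcomp p r) = x p" using amult_right_at by blast
  note R = lin_reindex[OF fx inj ex at]
  have "lin (Gc o1 o2 ql rl u) ?y = 0" for o1 o2 ql rl u
  proof -
    have "lin (Gc o1 o2 ql rl u) ?y = lin (\<lambda>p. if ?C p then (Gc o1 o2 ql rl u (pcomp p r) :: 'k) else 0) x"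
      using R(1) .
    also have "\<dots> = 0"
    proof (cases "o2 = None \<or> o2 = Some (fst r)")
      case True
      have "lin (\<lambda>p. if ?C p then (Gc o1 o2 ql rl u (pcomp p r) :: 'k) else 0) x =
            lin (Gc o1 (Some (ptgt tgtQ r)) ql (snd r @ rl) u) x"
        by (simp add: Gc_r[OF True])
      also have "\<dots> = 0" using I unfolding Inv_def by blast
      finally show ?thesis .
    next
      case False
      then obtain e where "o2 = Some e" "e \<noteq> fst r" by (cases o2) auto
      then show ?thesis using Gc_r0 by (intro lin_F0) blast
    qed
    finally show ?thesis .
  qed
  then show ?thesis using R(2) by (simp add: Inv_def)
qed

lemma Inv_I:
  assumes "x \<in> I_Gamma H s \<iota> \<rho> m"
  shows "Inv (x :: _ \<Rightarrow> 'k::field)"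
  using assms unfolding IQ_eq
proof (induct rule: ideal_gen.induct)
  case zero then show ?case by (simp add: Inv_def lin_zero)
next
  case (gen g)
  then show ?case
  proof
    assume "g \<in> {pvec (mkP \<iota> [a, b]) | a b. a \<in> H \<and> b \<in> H \<and> btgt \<iota> \<rho> b = bsrc \<iota> a \<and> b \<noteq> bsigma H \<rho> a}"
    then obtain a b where g: "g = pvec (mkP \<iota> [a, b])" "b \<in> H" "b \<noteq> sg a" by blast
    have ne: "a \<noteq> \<rho> b"
    proof
      assume "a = \<rho> b" then have "sg a = b" using sg_rho[OF g(2)] by simp
      then show False using g(3) by simp
    qed
    have "lin (Gc o1 o2 ql rl u) g = 0" for o1 o2 ql rl u
    proof -
      have "lin (Gc o1 o2 ql rl u) g = (Gc o1 o2 ql rl u (mkP \<iota> [a, b]) :: 'k)" unfolding g(1) by (rule lin_pvec)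
      also have "\<dots> = 0" by (simp add: Gc_def mkP_def Nl_I[OF ne, simplified])
      finally show ?thesis .
    qed
    then show ?thesis using fin_pvec g(1) by (simp add: Inv_def)
  next
    assume "g \<in> {(\<lambda>x. pvec (mkP \<iota> (ppow (cyc_at H s \<rho> h) (m (s h)))) x
            - pvec (mkP \<iota> (ppow (cyc_at H s \<rho> (\<iota> h)) (m (s (\<iota> h))))) x) | h. h \<in> H}"
    then obtain h where h: "h \<in> H" "g = (\<lambda>x. pvec (mkP \<iota> (Cy h)) x - pvec (mkP \<iota> (Cy (\<iota> h))) x)"
      unfolding Cy_def by blast
    have "lin (Gc o1 o2 ql rl u) g = 0" for o1 o2 ql rl u
    proof -
      have "lin (Gc o1 o2 ql rl u) g = (Gc o1 o2 ql rl u (mkP \<iota> (Cy h)) :: 'k) - Gc o1 o2 ql rl u (mkP \<iota> (Cy (\<iota> h)))"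
        unfolding h(2) by (simp add: lin_diff fin_pvec lin_pvec)
      also have "\<dots> = 0"
      proof -
        have ok: "okp o1 o2 (mkP \<iota> (Cy h)) = okp o1 o2 (mkP \<iota> (Cy (\<iota> h)))"
          unfolding okp_def Cy_iota_fst[OF h(1)] Cy_iota_tgt[OF h(1)] ..
        have n1: "Cy h \<noteq> []" "Cy (\<iota> h) \<noteq> []" using Cy_props(5) h(1) iota_H by auto
        have "(Nl (ql @ Cy h @ rl) :: _ \<Rightarrow> 'k) = Nl (ql @ Cy (\<iota> h) @ rl)" using Nl_II'[OF h(1)] .
        then show ?thesis using ok n1 by (simp add: Gc_def mkP_def)
      qed
      finally show ?thesis .
    qed
    moreover have "finite {p. g p \<noteq> 0}" unfolding h(2) by (rule fin_diff[OF fin_pvec fin_pvec])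
    ultimately show ?thesis by (simp add: Inv_def)
  qed
next
  case (add x y)
  then show ?case by (simp add: Inv_def lin_add fin_add)
next
  case (smult x c)
  then show ?case by (simp add: Inv_def lin_smult fin_smult)
next
  case (lmult x q) then show ?case using Inv_lmult by blast
next
  case (rmult x r) then show ?case using Inv_rmult by blast
qed

lemma NL_Gc: "NL x u = lin (Gc None None [] [] u) (x :: _ \<Rightarrow> 'k::field)"
  unfolding NL_def by (rule lin_cong) (simp add: Gc_def okp_def Np_def)

lemma NL_I: "x \<in> I_Gamma H s \<iota> \<rho> m \<Longrightarrow> NL (x :: _ \<Rightarrow> 'k::field) = (\<lambda>_. 0)"
proof
  fix u assume "x \<in> I_Gamma H s \<iota> \<rho> m"
  then have "Inv x" by (rule Inv_I)
  then show "NL x u = 0" unfolding NL_Gc Inv_def by blast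
qed

lemma NL_diff: "finite {p. x p \<noteq> 0} \<Longrightarrow> finite {p. y p \<noteq> 0} \<Longrightarrow>
   NL (\<lambda>p. x p - y p) = (\<lambda>u. NL x u - NL (y :: _ \<Rightarrow> 'k::field) u)"
  unfolding NL_def by (rule ext) (rule lin_diff)

end


lemma lin_stepA:
  assumes "finite {p. f p \<noteq> 0}"
  shows "lin F (\<lambda>x. f x + c * (pvec a x - pvec b x)) = lin F f + c * (F a - F (b :: ('x, 'y) path) :: 'k::field)"
proof -
  have f1: "finite {x. (pvec a x :: 'k) - pvec b x \<noteq> 0}" by (rule fin_diff[OF fin_pvec fin_pvec])
  have "lin F (\<lambda>x. f x + c * (pvec a x - pvec b x)) = lin F f + lin F (\<lambda>x. c * ((pvec a x :: 'k) - pvec b x))"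
    by (rule lin_add[OF assms fin_smult[OF f1]])
  also have "lin F (\<lambda>x. c * ((pvec a x :: 'k) - pvec b x)) = c * lin F (\<lambda>x. (pvec a x :: 'k) - pvec b x)"
    by (rule lin_smult[OF f1])
  also have "lin F (\<lambda>x. (pvec a x :: 'k) - pvec b x) = F a - F b"
    by (simp add: lin_diff[OF fin_pvec fin_pvec] lin_pvec)
  finally show ?thesis .
qed

lemma lin_stepB:
  assumes "finite {p. f p \<noteq> 0}"
  shows "lin F (\<lambda>x. f x + c * (0 - pvec b x)) = lin F f - c * (F (b :: ('x, 'y) path) :: 'k::field)"
proof -
  have "(\<lambda>x. f x + c * (0 - (pvec b x :: 'k))) = (\<lambda>x. f x + (- c) * pvec b x)" by (rule ext) simp
  moreover have "lin F (\<lambda>x. f x + (- c) * (pvec b x :: 'k)) = lin F f + lin F (\<lambda>x. (- c) * (pvec b x :: 'k))"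
    by (rule lin_add[OF assms fin_smult[OF fin_pvec]])
  moreover have "lin F (\<lambda>x. (- c) * (pvec b x :: 'k)) = (- c) * F b"
  proof -
    have e1: "lin F (\<lambda>x. (- c) * (pvec b x :: 'k)) = (- c) * lin F (pvec b)" by (rule lin_smult[OF fin_pvec])
    have e2: "lin F (pvec b) = (F b :: 'k)" by (rule lin_pvec)
    show ?thesis unfolding e1 e2 ..
  qed
  ultimately show ?thesis by simp
qed

lemma pa_diff: "x \<in> path_alg valid \<Longrightarrow> y \<in> path_alg valid \<Longrightarrow> (\<lambda>p. x p - y p) \<in> path_alg (valid :: _ \<Rightarrow> bool)"
proof -
  assume x: "x \<in> path_alg valid" and y: "y \<in> path_alg valid"
  have "finite {p. x p - y p \<noteq> 0}" using x y fin_diff unfolding path_alg_def by blast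
  moreover have "\<forall>p. x p - y p \<noteq> 0 \<longrightarrow> valid p"
  proof (intro allI impI)
    fix p assume "x p - y p \<noteq> 0"
    then have "x p \<noteq> 0 \<or> y p \<noteq> 0" by auto
    then show "valid p" using x y unfolding path_alg_def by blast
  qed
  ultimately show ?thesis unfolding path_alg_def by blast
qed

lemma pa_mono: "x \<in> path_alg v1 \<Longrightarrow> (\<And>p. v1 p \<Longrightarrow> v2 p) \<Longrightarrow> x \<in> path_alg v2"
  unfolding path_alg_def by blast

context BG
begin

definition wt :: "('h set, 'h) path \<Rightarrow> nat" where
  "wt p = length (filter (\<lambda>a. s a \<in> V1) (snd p))"

lemma filter_Cy_V1: "h \<in> H \<Longrightarrow> s h \<in> V1 \<Longrightarrow> filter (\<lambda>a. s a \<in> V1) (Cy h) = Cy h"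
proof -
  assume h: "h \<in> H" "s h \<in> V1"
  have "\<forall>e\<in>set (Cy h). s e \<in> V1"
    using chain_s[OF Cy_props(1)[OF h(1)]] Cy_props(2)[OF h(1)] h(2) by simp
  then show ?thesis by (simp add: filter_id_conv)
qed

lemma filter_Cy_V2: "h \<in> H \<Longrightarrow> s h \<in> V2 \<Longrightarrow> filter (\<lambda>a. s a \<in> V1) (Cy h) = []"
proof -
  assume h: "h \<in> H" "s h \<in> V2"
  have "\<forall>e\<in>set (Cy h). s e \<notin> V1"
    using chain_s[OF Cy_props(1)[OF h(1)]] Cy_props(2)[OF h(1)] h(2) notV12 by auto
  then show ?thesis by (simp add: filter_empty_conv)
qed

lemma red_an:
  assumes rs: "red_step (vA ArrQ') tgtQ (RR :: (_ \<times> (_ \<Rightarrow> 'k::field)) set) f g"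
  shows "\<exists>w. f w \<noteq> 0 \<and> vA ArrQ' w \<and>
    ((\<exists>w'. vA ArrQ' w' \<and> wt w' < wt w \<and> (Np w' :: _ \<Rightarrow> 'k) = Np w \<and> g = (\<lambda>x. f x + f w * (pvec w' x - pvec w x))) \<or>
     ((Np w :: _ \<Rightarrow> 'k) = (\<lambda>_. 0) \<and> g = (\<lambda>x. f x + f w * (0 - pvec w x))))"
proof -
  obtain t \<phi> q r where R: "(t, \<phi>) \<in> (RR :: (_ \<times> (_ \<Rightarrow> 'k::field)) set)" and vq: "vA ArrQ' q" and vr: "vA ArrQ' r"
    and c1: "ptgt tgtQ r = fst t" and c2: "ptgt tgtQ t = fst q" and nz: "f (pcomp q (pcomp t r)) \<noteq> 0"
    and g: "g = (\<lambda>x. f x + f (pcomp q (pcomp t r)) *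
               (amult tgtQ (amult tgtQ (pvec q) \<phi>) (pvec r) x - pvec (pcomp q (pcomp t r)) x))"
    using rs unfolding red_step_def by blast
  define w where "w = pcomp q (pcomp t r)"
  have vt: "vA ArrQ' t" using RS_part1[OF R] by blast
  have vtr: "vA ArrQ' (pcomp t r)" by (rule vA_comp[OF vt vr c1])
  have vw: "vA ArrQ' w" unfolding w_def by (rule vA_comp[OF vq vtr]) (simp add: ptgt_comp_l[OF c1] c2)
  have sw: "snd w = snd q @ snd t @ snd r" unfolding w_def by simp
  from R show ?thesis
  proof (cases rule: R_cases)
    case (a h)
    define Phi where "Phi = mkP \<iota> (Cy (\<iota> h))"
    have gd: "good (Cy (\<iota> h))" using good_Cy_iota a(1,2) by blast
    have vP: "vA ArrQ' Phi" unfolding Phi_def using good_valid[OF gd] .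
    have cP1: "ptgt tgtQ Phi = fst q" using Cy_iota_tgt[OF a(1)] c2 a(4) unfolding Phi_def by simp
    have cP2: "fst (pcomp q Phi) = ptgt tgtQ r" using Cy_iota_fst[OF a(1)] c1 a(4) unfolding Phi_def by simp
    define w' where "w' = pcomp (pcomp q Phi) r"
    have am: "amult tgtQ (amult tgtQ (pvec q) \<phi>) (pvec r) = (pvec w' :: _ \<Rightarrow> 'k)"
      unfolding a(5) w'_def Phi_def by (simp add: amult_pp_l[OF cP1[unfolded Phi_def]] amult_pp_r[OF cP2[unfolded Phi_def]])
    have vw': "vA ArrQ' w'" unfolding w'_def by (rule vA_comp[OF vA_comp[OF vq vP cP1] vr]) (use cP2 in simp)
    have sw': "snd w' = snd q @ Cy (\<iota> h) @ snd r" unfolding w'_def Phi_def by (simp add: mkP_def)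
    have st: "snd t = Cy h" using a(4) by (simp add: mkP_def)
    have ih: "\<iota> h \<in> H" using iota_H[OF a(1)] .
    have wtlt: "wt w' < wt w"
    proof -
      have "wt w' = length (filter (\<lambda>a. s a \<in> V1) (snd q)) + length (filter (\<lambda>a. s a \<in> V1) (snd r))"
        unfolding wt_def sw' using filter_Cy_V2[OF ih sV1_iota[OF a(1,2)]] by simp
      moreover have "wt w = length (filter (\<lambda>a. s a \<in> V1) (snd q)) + length (Cy h) + length (filter (\<lambda>a. s a \<in> V1) (snd r))"
        unfolding wt_def sw st using filter_Cy_V1[OF a(1,2)] by simp
      moreover have "length (Cy h) > 0" using Cy_props(5)[OF a(1)] by simp
      ultimately show ?thesis by simp
    qed
    have np: "(Np w' :: _ \<Rightarrow> 'k) = Np w"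
    proof -
      have n1: "snd w \<noteq> []" using sw st Cy_props(5)[OF a(1)] by simp
      have n2: "snd w' \<noteq> []" using sw' Cy_props(5)[OF ih] by simp
      have e: "(Nl (snd q @ Cy h @ snd r) :: _ \<Rightarrow> 'k) = Nl (snd q @ Cy (\<iota> h) @ snd r)" by (rule Nl_II[OF a(1,2)])
      have "(Np w' :: _ \<Rightarrow> 'k) = Nl (snd w')" using n2 by (simp add: Np_def)
      also have "\<dots> = Nl (snd q @ Cy (\<iota> h) @ snd r)" unfolding sw' ..
      also have "\<dots> = Nl (snd q @ Cy h @ snd r)" using e by simp
      also have "\<dots> = Nl (snd w)" unfolding sw st ..
      also have "\<dots> = Np w" using n1 by (simp add: Np_def)
      finally show ?thesis .
    qed
    have "g = (\<lambda>x. f x + f w * (pvec w' x - pvec w x))" unfolding g am w_def ..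
    then show ?thesis using nz vw vw' wtlt np unfolding w_def by blast
  next
    case (b h)
    have am: "amult tgtQ (amult tgtQ (pvec q) \<phi>) (pvec r) = (\<lambda>_. 0 :: 'k)"
      unfolding b(4) by (simp add: amult_l_zero amult_r_zero)
    have "(Np w :: _ \<Rightarrow> 'k) = Nl (snd q @ Bl h @ snd r)" using sw b(3) by (simp add: Np_def mkP_def Bl_def)
    also have "\<dots> = (\<lambda>_. 0)" by (rule Nl_b[OF b(1,2)])
    finally have np: "(Np w :: _ \<Rightarrow> 'k) = (\<lambda>_. 0)" .
    have "g = (\<lambda>x. f x + f w * (0 - pvec w x))" unfolding g am w_def ..
    then show ?thesis using nz vw np unfolding w_def by blast
  next
    case (c a b)
    have am: "amult tgtQ (amult tgtQ (pvec q) \<phi>) (pvec r) = (\<lambda>_. 0 :: 'k)"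
      unfolding c(6) by (simp add: amult_l_zero amult_r_zero)
    have bH: "b \<in> H" using c(2) Arr'_H by blast
    have ne: "a \<noteq> \<rho> b" using c(4) sg_neq_rho[OF bH] by blast
    have "(Np w :: _ \<Rightarrow> 'k) = Nl (snd q @ [a, b] @ snd r)" using sw c(5) by (simp add: Np_def mkP_def)
    also have "\<dots> = (\<lambda>_. 0)" by (rule Nl_I[OF ne])
    finally have np: "(Np w :: _ \<Rightarrow> 'k) = (\<lambda>_. 0)" .
    have "g = (\<lambda>x. f x + f w * (0 - pvec w x))" unfolding g am w_def ..
    then show ?thesis using nz vw np unfolding w_def by blast
  qed
qed

definition Phi :: "(('h set, 'h) path \<Rightarrow> 'k::field) \<Rightarrow> nat" where
  "Phi f = (\<Sum>p\<in>{p. f p \<noteq> 0}. (2::nat) ^ wt p)"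

lemma red_dec:
  assumes rs: "red_step (vA ArrQ') tgtQ (RR :: (_ \<times> (_ \<Rightarrow> 'k::field)) set) f g"
    and fin: "finite {p. f p \<noteq> 0}" and val: "\<forall>u. f u \<noteq> 0 \<longrightarrow> vA ArrQ' u"
  shows "finite {p. g p \<noteq> 0} \<and> Phi g < Phi f \<and> (\<forall>u. g u \<noteq> 0 \<longrightarrow> vA ArrQ' u) \<and> NL g = NL f"
proof -
  let ?S = "{p. f p \<noteq> 0}"
  obtain w where w: "f w \<noteq> 0" "vA ArrQ' w" and alt:
    "(\<exists>w'. vA ArrQ' w' \<and> wt w' < wt w \<and> (Np w' :: _ \<Rightarrow> 'k) = Np w \<and> g = (\<lambda>x. f x + f w * (pvec w' x - pvec w x))) \<or>
     ((Np w :: _ \<Rightarrow> 'k) = (\<lambda>_. 0) \<and> g = (\<lambda>x. f x + f w * (0 - pvec w x)))"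
    using red_an[OF rs] by blast
  have wS: "w \<in> ?S" using w(1) by simp
  have PF: "Phi f = 2 ^ wt w + (\<Sum>p\<in>?S - {w}. (2::nat) ^ wt p)"
    unfolding Phi_def using sum.remove[OF fin wS] .
  from alt show ?thesis
  proof
    assume "\<exists>w'. vA ArrQ' w' \<and> wt w' < wt w \<and> (Np w' :: _ \<Rightarrow> 'k) = Np w \<and> g = (\<lambda>x. f x + f w * (pvec w' x - pvec w x))"
    then obtain w' where w': "vA ArrQ' w'" "wt w' < wt w" "(Np w' :: _ \<Rightarrow> 'k) = Np w"
      and g: "g = (\<lambda>x. f x + f w * (pvec w' x - pvec w x))" by blast
    have ww: "w' \<noteq> w" using w'(2) by auto
    have sub: "{p. g p \<noteq> 0} \<subseteq> insert w' (?S - {w})"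
    proof
      fix u assume u: "u \<in> {p. g p \<noteq> 0}"
      show "u \<in> insert w' (?S - {w})"
      proof (cases "u = w")
        case True then have "g u = 0" using ww g by (simp add: pvec_def)
        then show ?thesis using u by simp
      next
        case False
        show ?thesis
        proof (cases "u = w'")
          case True then show ?thesis by simp
        next
          case False2: False
          then have "g u = f u" using False g by (simp add: pvec_def)
          then show ?thesis using u False by simp
        qed
      qed
    qed
    have fin2: "finite (insert w' (?S - {w}))" using fin by simp
    have fing: "finite {p. g p \<noteq> 0}" using finite_subset[OF sub fin2] .
    have "Phi g \<le> (\<Sum>p\<in>insert w' (?S - {w}). (2::nat) ^ wt p)"
      unfolding Phi_def by (rule sum_mono2[OF fin2 sub]) simp
    also have "\<dots> \<le> 2 ^ wt w' + (\<Sum>p\<in>?S - {w}. (2::nat) ^ wt p)"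
      using fin by (simp add: sum.insert_if)
    also have "\<dots> < Phi f" unfolding PF using w'(2) by simp
    finally have lt: "Phi g < Phi f" .
    have vg: "\<forall>u. g u \<noteq> 0 \<longrightarrow> vA ArrQ' u" using sub val w'(1) by blast
    have "NL g = NL f"
    proof
      fix u
      have "NL g u = lin (\<lambda>p. Np p u) f + f w * ((Np w' :: _ \<Rightarrow> 'k) u - Np w u)"
        unfolding NL_def g by (rule lin_stepA[OF fin])
      then show "NL g u = NL f u" using w'(3) by (simp add: NL_def)
    qed
    then show ?thesis using fing lt vg by blast
  next
    assume a: "(Np w :: _ \<Rightarrow> 'k) = (\<lambda>_. 0) \<and> g = (\<lambda>x. f x + f w * (0 - pvec w x))"
    then have g: "g = (\<lambda>x. f x + f w * (0 - pvec w x))" by blast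
    have sub: "{p. g p \<noteq> 0} \<subseteq> ?S - {w}"
    proof
      fix u assume u: "u \<in> {p. g p \<noteq> 0}"
      show "u \<in> ?S - {w}"
      proof (cases "u = w")
        case True then have "g u = 0" using g by (simp add: pvec_def)
        then show ?thesis using u by simp
      next
        case False
        then have "g u = f u" using g by (simp add: pvec_def)
        then show ?thesis using u False by simp
      qed
    qed
    have fin2: "finite (?S - {w})" using fin by simp
    have fing: "finite {p. g p \<noteq> 0}" using finite_subset[OF sub fin2] .
    have "Phi g \<le> (\<Sum>p\<in>?S - {w}. (2::nat) ^ wt p)"
      unfolding Phi_def by (rule sum_mono2[OF fin2 sub]) simp
    also have "\<dots> < Phi f" unfolding PF by simp
    finally have lt: "Phi g < Phi f" .
    have vg: "\<forall>u. g u \<noteq> 0 \<longrightarrow> vA ArrQ' u" using sub val by blast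
    have "NL g = NL f"
    proof
      fix u
      have "NL g u = lin (\<lambda>p. Np p u) f - f w * (Np w :: _ \<Rightarrow> 'k) u"
        unfolding NL_def g by (rule lin_stepB[OF fin])
      then show "NL g u = NL f u" using a by (simp add: NL_def)
    qed
    then show ?thesis using fing lt vg by blast
  qed
qed

lemma reach:
  assumes "(red_step (vA ArrQ') tgtQ (RR :: (_ \<times> (_ \<Rightarrow> 'k::field)) set))\<^sup>*\<^sup>* (pvec p) g" and vp: "vA ArrQ' p"
  shows "finite {u. g u \<noteq> 0} \<and> (\<forall>u. g u \<noteq> 0 \<longrightarrow> vA ArrQ' u) \<and> NL g = NL (pvec p)"
  using assms(1)
proof (induct rule: rtranclp_induct)
  case base
  have "\<forall>u. (pvec p :: _ \<Rightarrow> 'k) u \<noteq> 0 \<longrightarrow> vA ArrQ' u" using vp pvec_nz by metis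
  then show ?case using fin_pvec by blast
next
  case (step y z)
  then show ?case using red_dec[OF step(2)] by auto
qed

lemma no_inf:
  assumes vp: "vA ArrQ' p"
  shows "\<not> (\<exists>c. c 0 = pvec p \<and> (\<forall>n. red_step (vA ArrQ') tgtQ (RR :: (_ \<times> (_ \<Rightarrow> 'k::field)) set) (c n) (c (Suc n))))"
proof
  assume "\<exists>c. c 0 = pvec p \<and> (\<forall>n. red_step (vA ArrQ') tgtQ (RR :: (_ \<times> (_ \<Rightarrow> 'k::field)) set) (c n) (c (Suc n)))"
  then obtain c where c0: "c 0 = pvec p" and cs: "\<And>n. red_step (vA ArrQ') tgtQ (RR :: (_ \<times> (_ \<Rightarrow> 'k::field)) set) (c n) (c (Suc n))"
    by blast
  have inv: "finite {u. c n u \<noteq> 0} \<and> (\<forall>u. c n u \<noteq> 0 \<longrightarrow> vA ArrQ' u) \<and> Phi (c n) + n \<le> Phi (c 0)" for n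
  proof (induct n)
    case 0
    have "\<forall>u. (pvec p :: _ \<Rightarrow> 'k) u \<noteq> 0 \<longrightarrow> vA ArrQ' u" using vp pvec_nz by metis
    then show ?case using c0 fin_pvec by simp
  next
    case (Suc n)
    then show ?case using red_dec[OF cs[of n]] by auto
  qed
  then have "Phi (c (Suc (Phi (c 0)))) + Suc (Phi (c 0)) \<le> Phi (c 0)" by blast
  then show False by simp
qed

lemma RU: "vA ArrQ' p \<Longrightarrow> reduction_unique (vA ArrQ') tgtQ (RR :: (_ \<times> (_ \<Rightarrow> 'k::field)) set) p"
proof -
  assume vp: "vA ArrQ' p"
  have u: "g1 = g2" if r1: "(red_step (vA ArrQ') tgtQ (RR :: (_ \<times> (_ \<Rightarrow> 'k::field)) set))\<^sup>*\<^sup>* (pvec p) g1"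
    and i1: "\<forall>u. g1 u \<noteq> 0 \<longrightarrow> irreducible_path (RR :: (_ \<times> (_ \<Rightarrow> 'k::field)) set) u"
    and r2: "(red_step (vA ArrQ') tgtQ (RR :: (_ \<times> (_ \<Rightarrow> 'k::field)) set))\<^sup>*\<^sup>* (pvec p) g2"
    and i2: "\<forall>u. g2 u \<noteq> 0 \<longrightarrow> irreducible_path (RR :: (_ \<times> (_ \<Rightarrow> 'k::field)) set) u" for g1 g2
  proof -
    have a1: "finite {u. g1 u \<noteq> 0} \<and> (\<forall>u. g1 u \<noteq> 0 \<longrightarrow> vA ArrQ' u) \<and> NL g1 = NL (pvec p)" using reach[OF r1 vp] .
    have a2: "finite {u. g2 u \<noteq> 0} \<and> (\<forall>u. g2 u \<noteq> 0 \<longrightarrow> vA ArrQ' u) \<and> NL g2 = NL (pvec p)" using reach[OF r2 vp] .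
    have p1: "g1 \<in> path_alg (vA ArrQ')" using a1 by (simp add: path_alg_def)
    have p2: "g2 \<in> path_alg (vA ArrQ')" using a2 by (simp add: path_alg_def)
    have "g1 = NL g1" using NL_id[OF p1 i1] by simp
    also have "\<dots> = NL g2" using a1 a2 by simp
    also have "\<dots> = g2" using NL_id[OF p2 i2] by simp
    finally show ?thesis .
  qed
  show ?thesis unfolding reduction_unique_def using no_inf[OF vp] u by blast
qed

end


context BG
begin

lemma P4Q': "vA ArrQ' p \<Longrightarrow> (\<lambda>u. pvec p u - (Np p :: _ \<Rightarrow> 'k::field) u) \<in> ideal_gen (vA ArrQ') tgtQ GR"
  by (rule P4gen[OF Arr'_H Arr'_V2 G1_R G2_R G3_R])

lemma P4Q: "vA H p \<Longrightarrow> (\<lambda>u. pvec p u - (Np p :: _ \<Rightarrow> 'k::field) u) \<in> I_Gamma H s \<iota> \<rho> m"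
  unfolding IQ_eq
  apply (rule P4gen[where A = H])
       apply (rule order_refl)
      apply simp
     apply (rule G1_I[unfolded IQ_eq]; assumption)
    apply (rule G2_I[unfolded IQ_eq]; assumption)
   apply (rule G3_I[unfolded IQ_eq]; assumption)
  apply assumption
  done

lemma vAr_vH: "vA ArrQ' p \<Longrightarrow> vA H p"
  using vA_mono[OF Arr'_H] .

lemma GR_in_I: "g \<in> (GR :: ((_ \<Rightarrow> 'k::field)) set) \<Longrightarrow> g \<in> I_Gamma H s \<iota> \<rho> m"
proof -
  assume "g \<in> (GR :: ((_ \<Rightarrow> 'k::field)) set)"
  then obtain t \<phi> where g: "g = (\<lambda>x. pvec t x - \<phi> x)" and R: "(t, \<phi>) \<in> (RR :: (_ \<times> (_ \<Rightarrow> 'k)) set)" by blast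
  from R show ?thesis
  proof (cases rule: R_cases)
    case (a h)
    then show ?thesis using g G3_I[OF a(1)] by simp
  next
    case (b h)
    then show ?thesis using g G2_I[OF b(1,2)] by simp
  next
    case (c a b)
    have aH: "a \<in> H" and bH: "b \<in> H" using c(1,2) Arr'_H by auto
    have "a \<noteq> \<rho> b" using sg_neq_rho[OF bH c(4)] .
    then show ?thesis using g c G1_I[OF aH bH c(3)] by simp
  qed
qed

lemma GR_pa: "g \<in> (GR :: ((_ \<Rightarrow> 'k::field)) set) \<Longrightarrow> g \<in> path_alg (vA ArrQ')"
proof -
  assume "g \<in> (GR :: ((_ \<Rightarrow> 'k::field)) set)"
  then obtain t \<phi> where g: "g = (\<lambda>x. pvec t x - \<phi> x)" and R: "(t, \<phi>) \<in> (RR :: (_ \<times> (_ \<Rightarrow> 'k)) set)" by blast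
  have "vA ArrQ' t" "\<phi> \<in> path_alg (vA ArrQ')" using RS_part1[OF R] by auto
  then show ?thesis using g pa_diff pvec_path_alg by blast
qed

lemma IR_sub: "y \<in> ideal_gen (vA ArrQ') tgtQ (GR :: ((_ \<Rightarrow> 'k::field)) set) \<Longrightarrow>
   y \<in> I_Gamma H s \<iota> \<rho> m \<and> y \<in> path_alg (vA ArrQ')"
proof -
  assume y: "y \<in> ideal_gen (vA ArrQ') tgtQ (GR :: ((_ \<Rightarrow> 'k::field)) set)"
  have "y \<in> I_Gamma H s \<iota> \<rho> m"
    unfolding IQ_eq by (rule ig_mono[OF y vAr_vH GR_in_I[unfolded IQ_eq]])
  moreover have "y \<in> path_alg (vA ArrQ')"
    by (rule ig_path_alg[OF y GR_pa vA_comp])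
  ultimately show ?thesis by blast
qed

lemma final1: "reduction_system (validQ' H s \<iota> \<rho> m V1) (btgt \<iota> \<rho>)
            (R_Gamma H s \<iota> \<rho> m V1 V2 :: (('h set, 'h) path \<times> (('h set, 'h) path \<Rightarrow> 'k::field)) set)"
  unfolding vQ'_def' by (rule RS)

lemma final2: "diamond_condition (validQ' H s \<iota> \<rho> m V1) (btgt \<iota> \<rho>)
            (R_Gamma H s \<iota> \<rho> m V1 V2 :: (('h set, 'h) path \<times> (('h set, 'h) path \<Rightarrow> 'k::field)) set)
            (I'_Gamma H s \<iota> \<rho> m V1)"
  unfolding diamond_condition_def vQ'_def'
proof (intro conjI allI impI)
  show "\<And>p. vA ArrQ' p \<Longrightarrow> reduction_unique (vA ArrQ') tgtQ (RR :: (_ \<times> (_ \<Rightarrow> 'k)) set) p" by (rule RU)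
  show "I'_Gamma H s \<iota> \<rho> m V1 = ideal_gen (vA ArrQ') tgtQ (GR :: ((_ \<Rightarrow> 'k::field)) set)"
  proof (intro equalityI subsetI)
    fix x :: "_ \<Rightarrow> 'k"
    assume "x \<in> I'_Gamma H s \<iota> \<rho> m V1"
    then have xI: "x \<in> I_Gamma H s \<iota> \<rho> m" and xp: "x \<in> path_alg (vA ArrQ')"
      unfolding I'_Gamma_def vQ'_def' by blast+
    have "(\<lambda>u. x u - NL x u) \<in> ideal_gen (vA ArrQ') tgtQ (GR :: ((_ \<Rightarrow> 'k::field)) set)"
      by (rule lin_ext[OF P4Q' xp])
    moreover have "NL x = (\<lambda>_. 0)" by (rule NL_I[OF xI])
    ultimately show "x \<in> ideal_gen (vA ArrQ') tgtQ (GR :: ((_ \<Rightarrow> 'k::field)) set)" by simp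
  next
    fix x :: "_ \<Rightarrow> 'k"
    assume "x \<in> ideal_gen (vA ArrQ') tgtQ (GR :: ((_ \<Rightarrow> 'k::field)) set)"
    then have "x \<in> I_Gamma H s \<iota> \<rho> m \<and> x \<in> path_alg (vA ArrQ')" by (rule IR_sub)
    then show "x \<in> I'_Gamma H s \<iota> \<rho> m V1" unfolding I'_Gamma_def vQ'_def' by blast
  qed
qed

lemma final3: "\<forall>f \<in> path_alg (validQ' H s \<iota> \<rho> m V1) :: (('h set, 'h) path \<Rightarrow> 'k::field) set.
            \<exists>!g. g \<in> path_alg (validQ' H s \<iota> \<rho> m V1) \<and>
                 (\<forall>u. g u \<noteq> 0 \<longrightarrow>
                    irreducible_path (R_Gamma H s \<iota> \<rho> m V1 V2 :: (('h set, 'h) path \<times> (('h set, 'h) path \<Rightarrow> 'k)) set) u) \<and>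
                 (\<lambda>x. f x - g x) \<in> I'_Gamma H s \<iota> \<rho> m V1"
  unfolding vQ'_def' I'_Gamma_def
proof
  fix f :: "_ \<Rightarrow> 'k"
  assume f: "f \<in> path_alg (vA ArrQ')"
  have fH: "f \<in> path_alg (vA H)" using pa_mono[OF f vAr_vH] .
  let ?g = "NL f"
  have g1: "?g \<in> path_alg (vA ArrQ')" and g2: "\<forall>u. ?g u \<noteq> 0 \<longrightarrow> irreducible_path (RR :: (_ \<times> (_ \<Rightarrow> 'k)) set) u"
    using NL_out[OF fH] by auto
  have g3: "(\<lambda>x. f x - ?g x) \<in> I_Gamma H s \<iota> \<rho> m"
    unfolding IQ_eq by (rule lin_ext[OF P4Q[unfolded IQ_eq] fH])
  have g4: "(\<lambda>x. f x - ?g x) \<in> path_alg (vA ArrQ')" using pa_diff[OF f g1] .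
  show "\<exists>!g. g \<in> path_alg (vA ArrQ') \<and> (\<forall>u. g u \<noteq> 0 \<longrightarrow> irreducible_path (RR :: (_ \<times> (_ \<Rightarrow> 'k)) set) u) \<and>
           (\<lambda>x. f x - g x) \<in> I_Gamma H s \<iota> \<rho> m \<inter> path_alg (vA ArrQ')"
  proof (rule ex1I[of _ ?g])
    show "?g \<in> path_alg (vA ArrQ') \<and> (\<forall>u. ?g u \<noteq> 0 \<longrightarrow> irreducible_path (RR :: (_ \<times> (_ \<Rightarrow> 'k)) set) u) \<and>
           (\<lambda>x. f x - ?g x) \<in> I_Gamma H s \<iota> \<rho> m \<inter> path_alg (vA ArrQ')"
      using g1 g2 g3 g4 by blast
  next
    fix g assume "g \<in> path_alg (vA ArrQ') \<and> (\<forall>u. g u \<noteq> 0 \<longrightarrow> irreducible_path (RR :: (_ \<times> (_ \<Rightarrow> 'k)) set) u) \<and>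
           (\<lambda>x. f x - g x) \<in> I_Gamma H s \<iota> \<rho> m \<inter> path_alg (vA ArrQ')"
    then have h1: "g \<in> path_alg (vA ArrQ')" and h2: "\<forall>u. g u \<noteq> 0 \<longrightarrow> irreducible_path (RR :: (_ \<times> (_ \<Rightarrow> 'k)) set) u"
      and h3: "(\<lambda>x. f x - g x) \<in> I_Gamma H s \<iota> \<rho> m" by blast+
    have "(\<lambda>p. (f p - ?g p) - (f p - g p)) \<in> I_Gamma H s \<iota> \<rho> m"
      using g3 h3 unfolding IQ_eq by (rule ig_diff)
    moreover have "(\<lambda>p. (f p - ?g p) - (f p - g p)) = (\<lambda>p. g p - ?g p)" by (rule ext) simp
    ultimately have d: "(\<lambda>p. g p - ?g p) \<in> I_Gamma H s \<iota> \<rho> m" by simp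
    have fg: "finite {p. g p \<noteq> 0}" "finite {p. ?g p \<noteq> 0}" using h1 g1 by (auto simp: path_alg_def)
    have "(\<lambda>u. NL g u - NL ?g u) = (\<lambda>_. 0)" using NL_I[OF d] NL_diff[OF fg] by simp
    moreover have "NL g = g" by (rule NL_id[OF h1 h2])
    moreover have "NL ?g = ?g" by (rule NL_id[OF g1 g2])
    ultimately have "(\<lambda>u. g u - ?g u) = (\<lambda>_. 0)" by simp
    note z = this
    show "g = ?g"
    proof
      fix u
      have "g u - ?g u = 0" using fun_cong[OF z, of u] by simp
      then show "g u = ?g u" by simp
    qed
  qed
qed

lemma final4: "\<forall>f \<in> path_alg (validQ H \<iota> \<rho>) :: (('h set, 'h) path \<Rightarrow> 'k::field) set.
            \<exists>g \<in> path_alg (validQ' H s \<iota> \<rho> m V1). (\<lambda>x. f x - g x) \<in> I_Gamma H s \<iota> \<rho> m"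
  unfolding vQ'_def' vQ_def'
proof
  fix f :: "_ \<Rightarrow> 'k"
  assume fH: "f \<in> path_alg (vA H)"
  have g1: "NL f \<in> path_alg (vA ArrQ')" using NL_out[OF fH] by auto
  have g3: "(\<lambda>x. f x - NL f x) \<in> I_Gamma H s \<iota> \<rho> m"
    unfolding IQ_eq by (rule lin_ext[OF P4Q[unfolded IQ_eq] fH])
  show "\<exists>g\<in>path_alg (vA ArrQ'). (\<lambda>x. f x - g x) \<in> I_Gamma H s \<iota> \<rho> m" using g1 g3 by blast
qed

end

theorem mainTheorem2:
  fixes V :: "'v set" and H :: "'h set" and s :: "'h \<Rightarrow> 'v" and \<iota> \<rho> :: "'h \<Rightarrow> 'h"
    and m :: "'v \<Rightarrow> nat" and V1 V2 :: "'v set"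
  assumes "alg_closed TYPE('k::field_char_0)"
    and "brauer_graph V H s \<iota> \<rho> m"
    and "bipartition V H s \<iota> V1 V2"
  shows "reduction_system (validQ' H s \<iota> \<rho> m V1) (btgt \<iota> \<rho>)
            (R_Gamma H s \<iota> \<rho> m V1 V2 :: (('h set, 'h) path \<times> (('h set, 'h) path \<Rightarrow> 'k)) set)
       \<and> diamond_condition (validQ' H s \<iota> \<rho> m V1) (btgt \<iota> \<rho>)
            (R_Gamma H s \<iota> \<rho> m V1 V2 :: (('h set, 'h) path \<times> (('h set, 'h) path \<Rightarrow> 'k)) set)
            (I'_Gamma H s \<iota> \<rho> m V1)
       \<and> (\<forall>f \<in> path_alg (validQ' H s \<iota> \<rho> m V1) :: (('h set, 'h) path \<Rightarrow> 'k) set.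
            \<exists>!g. g \<in> path_alg (validQ' H s \<iota> \<rho> m V1) \<and>
                 (\<forall>u. g u \<noteq> 0 \<longrightarrow>
                    irreducible_path (R_Gamma H s \<iota> \<rho> m V1 V2 :: (('h set, 'h) path \<times> (('h set, 'h) path \<Rightarrow> 'k)) set) u) \<and>
                 (\<lambda>x. f x - g x) \<in> I'_Gamma H s \<iota> \<rho> m V1)
       \<and> (\<forall>f \<in> path_alg (validQ H \<iota> \<rho>) :: (('h set, 'h) path \<Rightarrow> 'k) set.
            \<exists>g \<in> path_alg (validQ' H s \<iota> \<rho> m V1). (\<lambda>x. f x - g x) \<in> I_Gamma H s \<iota> \<rho> m)"
proof -
  interpret B: BG V H s \<iota> \<rho> m V1 V2 using assms(2,3) by unfold_locales
  show ?thesis by (intro conjI B.final1 B.final2 B.final3 B.final4)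
qed



end
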